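(* Assume bifurcation assumption (B) with non-critical maximal cells, fix a root subnetwork $B$, and let $p\in C\setminus B$ be critical. Assume hypothesis (H) at $p$ and condition (SN). Then generically: (i) if $\bigl(\sum_{\tau:\tau(p)\in Q_p}a_\tau d_{\tau(p)}\bigr)/\sum_{\sigma,\tau\in\mathcal L_p}f_{\sigma\tau}>0$, the $p$-th bifurcation equation has no solution branches near $0$ for small $\lambda>0$; (ii) if $\bigl(\sum_{\tau:\tau(p)\in Q_p}a_\tau d_{\tau(p)}\bigr)/\sum_{\sigma,\tau\in\mathcal L_p}f_{\sigma\tau}<0$, it has the two (higher order saddle-node) branches $$x_p(\lambda)=d_p^\pm\lambda^{2^{-(\Xi_p+1)}}+O\bigl(|\lambda|^{2^{-\Xi_p}}\bigr)\ \text{for small }\lambda>0,\qquad d_p^\pm=\pm\sqrt{-\frac{\sum_{\tau:\tau(p)\in Q_p}a_\tau d_{\tau(p)}}{\sum_{\sigma,\tau\in\mathcal L_p}f_{\sigma\tau}}}\neq0.$$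
   Context: Network: finite cells $C$, pairwise distinct maps $\Sigma=\{\sigma_1,\dots,\sigma_n\}$, $\sigma_i\colon C\to C$, $\sigma_1=\mathrm{Id}_C$; feedforward (no cycles of length $\ge 2$); $p\trianglelefteq q$ iff there is a path from $q$ to $p$ (partial order), $q\vartriangleright p$ iff $p\trianglelefteq q$, $p\neq q$; maximal cells have $\sigma(p)=p$ for all $\sigma$. $\Sigma(p)=\{\sigma(p):\sigma\in\Sigma\}$, $\Sigma^\star(p)=\Sigma(p)\setminus\{p\}$. Bifurcation setting: $V=\mathbb R$, smooth $f\colon\mathbb R^n\times\mathbb R\to\mathbb R$ with first $n$ arguments labelled by $\Sigma$, $\gamma_f(x,\lambda)_p=f(x_{\sigma_1(p)},\dots,x_{\sigma_n(p)},\lambda)$; the $p$-th bifurcation equation $\gamma_f(x,\lambda)_p=0$ is solved for $x_p$ near 0 given $x_q(\lambda)$ for $q\vartriangleright p$. $a_\sigma=\partial_\sigma f(0,0)$, $f_{\sigma\tau}=\tfrac12\partial_\sigma\partial_\tau f(0,0)$. $\mathcal L_p=\{\sigma:\sigma(p)=p\}$; $p$ critical iff $\sum_{\sigma\in\mathcal L_p}a_\sigma=0$. (B): $f(0,0)=0$, some cell critical, exactly the cells sharing $\mathcal L_p$ with a critical cell are critical. Root subnetwork: a subnetwork ($\sigma(B)\subset B$ for all $\sigma$) $\emptyset\ne B\subsetneq C$ containing all maximal cells such that every $p\notin B$ with all $q\vartriangleright p$ in $B$ is critical. Hypothesis (H) at $p$: for all $q\vartriangleright p$ and small $\lambda>0$,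 $x_q(\lambda)=d_q\lambda^{2^{-\xi_q}}+O(|\lambda|^{2^{-(\xi_q-1)}})$ with $d_q\ne0$ and integers $\xi_q\ge0$; $\Xi_p=\max_{q\in\Sigma^\star(p)}\xi_q$; $Q_p=\{q\in\Sigma^\star(p):\xi_q=\Xi_p\}$. Condition (SN): $\Xi_p>0$ and $\sum_{\tau:\tau(p)\in Q_p}a_\tau d_{\tau(p)}\ne0$. "Generically" means for an open dense set of Taylor coefficients of $f$ at $(0,0)$. *)

theory Defs
  imports "HOL-Analysis.Analysis" "HOL-Library.Landau_Symbols"
begin

text \<open>Cells are the elements of a finite type 'c (so C = UNIV). The maps
  sigma_1..sigma_n are given by an injective labelling sig :: 's => 'c => 'c,
  indexed by a finite type 's; the distinguished index s1 has sig s1 = id.\<close>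

definition edges :: "('s \<Rightarrow> 'c \<Rightarrow> 'c) \<Rightarrow> ('c \<times> 'c) set" where
  "edges sig = {(sig s r, r) | s r. True}"

definition net_le :: "('s \<Rightarrow> 'c \<Rightarrow> 'c) \<Rightarrow> 'c \<Rightarrow> 'c \<Rightarrow> bool" where
  "net_le sig p q \<longleftrightarrow> (q, p) \<in> (edges sig)\<^sup>*"

definition net_above :: "('s \<Rightarrow> 'c \<Rightarrow> 'c) \<Rightarrow> 'c \<Rightarrow> 'c \<Rightarrow> bool" where
  "net_above sig q p \<longleftrightarrow> net_le sig p q \<and> p \<noteq> q"

text \<open>Feedforward: no cycles of length at least 2 (self loops allowed).\<close>
definition feedforward :: "('s \<Rightarrow> 'c \<Rightarrow> 'c) \<Rightarrow> bool" where
  "feedforward sig \<longleftrightarrow> (\<forall>p q. net_le sig p q \<and> net_le sig q p \<longrightarrow> p = q)"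

definition network :: "('s \<Rightarrow> 'c \<Rightarrow> 'c) \<Rightarrow> 's \<Rightarrow> bool" where
  "network sig s1 \<longleftrightarrow> inj sig \<and> sig s1 = id \<and> feedforward sig"

definition maximal_cell :: "('s \<Rightarrow> 'c \<Rightarrow> 'c) \<Rightarrow> 'c \<Rightarrow> bool" where
  "maximal_cell sig p \<longleftrightarrow> \<not> (\<exists>q. net_above sig q p)"

definition Sig_of :: "('s \<Rightarrow> 'c \<Rightarrow> 'c) \<Rightarrow> 'c \<Rightarrow> 'c set" where
  "Sig_of sig p = range (\<lambda>s. sig s p)"

definition Sig_star :: "('s \<Rightarrow> 'c \<Rightarrow> 'c) \<Rightarrow> 'c \<Rightarrow> 'c set" where
  "Sig_star sig p = Sig_of sig p - {p}"

definition Lset :: "('s \<Rightarrow> 'c \<Rightarrow> 'c) \<Rightarrow> 'c \<Rightarrow> 's set" where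
  "Lset sig p = {s. sig s p = p}"

definition subnetwork :: "('s \<Rightarrow> 'c \<Rightarrow> 'c) \<Rightarrow> 'c set \<Rightarrow> bool" where
  "subnetwork sig B \<longleftrightarrow> (\<forall>s. sig s ` B \<subseteq> B)"

fun pd :: "('a::real_normed_vector \<Rightarrow> real) \<Rightarrow> 'a list \<Rightarrow> 'a \<Rightarrow> real" where
  "pd g [] = g"
| "pd g (v # vs) = (\<lambda>z. frechet_derivative (pd g vs) (at z) v)"

definition smooth :: "('a::real_normed_vector \<Rightarrow> real) \<Rightarrow> bool" where
  "smooth g \<longleftrightarrow> (\<forall>vs z. pd g vs differentiable (at z))"

text \<open>The response function f takes (x, lambda) with x in R^n (coordinates
  labelled by 's) and lambda in R.\<close>
type_synonym 's resp = "((real^'s) \<times> real) \<Rightarrow> real"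

definition dirx :: "'s::finite \<Rightarrow> (real^'s) \<times> real" where
  "dirx s = (axis s 1, 0)"

definition acoef :: "'s::finite resp \<Rightarrow> 's \<Rightarrow> real" where
  "acoef f s = pd f [dirx s] 0"

definition fcoef :: "'s::finite resp \<Rightarrow> 's \<Rightarrow> 's \<Rightarrow> real" where
  "fcoef f s t = pd f [dirx s, dirx t] 0 / 2"

definition critical :: "('s::finite \<Rightarrow> 'c \<Rightarrow> 'c) \<Rightarrow> 's resp \<Rightarrow> 'c \<Rightarrow> bool" where
  "critical sig f p \<longleftrightarrow> (\<Sum>s\<in>Lset sig p. acoef f s) = 0"

definition assumption_B :: "('s::finite \<Rightarrow> 'c \<Rightarrow> 'c) \<Rightarrow> 's resp \<Rightarrow> bool" where
  "assumption_B sig f \<longleftrightarrow> f 0 = 0 \<and> (\<exists>p. critical sig f p) \<and>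
     (\<forall>p. critical sig f p \<longleftrightarrow> (\<exists>q. critical sig f q \<and> Lset sig p = Lset sig q))"

definition root_subnetwork ::
  "('s::finite \<Rightarrow> 'c \<Rightarrow> 'c) \<Rightarrow> 's resp \<Rightarrow> 'c set \<Rightarrow> bool" where
  "root_subnetwork sig f B \<longleftrightarrow> subnetwork sig B \<and> B \<noteq> {} \<and> B \<noteq> UNIV \<and>
     (\<forall>p. maximal_cell sig p \<longrightarrow> p \<in> B) \<and>
     (\<forall>p. p \<notin> B \<and> (\<forall>q. net_above sig q p \<longrightarrow> q \<in> B) \<longrightarrow> critical sig f p)"

text \<open>Given the states xs q lambda of the cells q above p, the p-th equation
  as a function of x_p and lambda.\<close>
definition peq :: "('s::finite \<Rightarrow> 'c \<Rightarrow> 'c) \<Rightarrow> 's resp \<Rightarrow> 'c \<Rightarrow> ('c \<Rightarrow> real \<Rightarrow> real)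
    \<Rightarrow> real \<Rightarrow> real \<Rightarrow> real" where
  "peq sig f p xs x lam =
     f (\<chi> s. if sig s p = p then x else xs (sig s p) lam, lam)"

definition hyp_H :: "('s::finite \<Rightarrow> 'c \<Rightarrow> 'c) \<Rightarrow> 'c \<Rightarrow> ('c \<Rightarrow> real \<Rightarrow> real)
    \<Rightarrow> ('c \<Rightarrow> real) \<Rightarrow> ('c \<Rightarrow> nat) \<Rightarrow> bool" where
  "hyp_H sig p xs d xi \<longleftrightarrow> (\<forall>q. net_above sig q p \<longrightarrow> d q \<noteq> 0 \<and>
     (\<lambda>lam. xs q lam - d q * lam powr (2 powr (- real (xi q))))
       \<in> O[at_right 0](\<lambda>lam. lam powr (2 powr (- (real (xi q) - 1)))))"

definition Xi :: "('s \<Rightarrow> 'c \<Rightarrow> 'c) \<Rightarrow> 'c \<Rightarrow> ('c \<Rightarrow> nat) \<Rightarrow> nat" where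
  "Xi sig p xi = Max (xi ` Sig_star sig p)"

definition Qset :: "('s \<Rightarrow> 'c \<Rightarrow> 'c) \<Rightarrow> 'c \<Rightarrow> ('c \<Rightarrow> nat) \<Rightarrow> 'c set" where
  "Qset sig p xi = {q \<in> Sig_star sig p. xi q = Xi sig p xi}"

definition SNsum :: "('s::finite \<Rightarrow> 'c \<Rightarrow> 'c) \<Rightarrow> 's resp \<Rightarrow> 'c \<Rightarrow> ('c \<Rightarrow> real)
    \<Rightarrow> ('c \<Rightarrow> nat) \<Rightarrow> real" where
  "SNsum sig f p d xi = (\<Sum>t\<in>{t. sig t p \<in> Qset sig p xi}. acoef f t * d (sig t p))"

definition Fsum :: "('s::finite \<Rightarrow> 'c \<Rightarrow> 'c) \<Rightarrow> 's resp \<Rightarrow> 'c \<Rightarrow> real" where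
  "Fsum sig f p = (\<Sum>s\<in>Lset sig p. \<Sum>t\<in>Lset sig p. fcoef f s t)"

definition cond_SN :: "('s::finite \<Rightarrow> 'c \<Rightarrow> 'c) \<Rightarrow> 's resp \<Rightarrow> 'c \<Rightarrow> ('c \<Rightarrow> real)
    \<Rightarrow> ('c \<Rightarrow> nat) \<Rightarrow> bool" where
  "cond_SN sig f p d xi \<longleftrightarrow> Xi sig p xi > 0 \<and> SNsum sig f p d xi \<noteq> 0"

text \<open>Taylor coefficients of order at most k at (0,0), recorded as the values
  of the iterated partial derivatives along lists of basis vectors.\<close>
definition jet :: "nat \<Rightarrow> 's::finite resp \<Rightarrow> (((real^'s) \<times> real) list \<Rightarrow> real)" where
  "jet k f = (\<lambda>vs. if length vs \<le> k \<and> set vs \<subseteq> Basis then pd f vs 0 else 0)"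

text \<open>The space of all possible k-jets (finite-dimensional: symmetric arrays
  supported on lists of basis vectors of length at most k).\<close>
definition jet_space :: "nat \<Rightarrow> (((real^'s::finite) \<times> real) list \<Rightarrow> real) set" where
  "jet_space k = {c. (\<forall>vs. \<not> (length vs \<le> k \<and> set vs \<subseteq> Basis) \<longrightarrow> c vs = 0) \<and>
                     (\<forall>vs ws. mset vs = mset ws \<longrightarrow> c vs = c ws)}"

text \<open>k-jets compatible with f(0,0)=0 and with the cells in K being exactly
  the critical ones (k >= 1).\<close>
definition crit_jet_space :: "('s::finite \<Rightarrow> 'c \<Rightarrow> 'c) \<Rightarrow> 'c set \<Rightarrow> nat
    \<Rightarrow> (((real^'s) \<times> real) list \<Rightarrow> real) set" where
  "crit_jet_space sig K k = {c \<in> jet_space k. c [] = 0 \<and>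
     (\<forall>q. q \<in> K \<longleftrightarrow> (\<Sum>s\<in>Lset sig q. c [dirx s]) = 0)}"

text \<open>A property P of response functions holds generically among those with
  critical set K: there is an open dense set U of Taylor coefficients (of some
  finite order k) in the space of coefficients compatible with the constraints,
  such that P holds for every smooth f with critical set K whose Taylor
  coefficients lie in U.\<close>
definition generically :: "('s::finite \<Rightarrow> 'c \<Rightarrow> 'c) \<Rightarrow> 'c set \<Rightarrow> ('s resp \<Rightarrow> bool) \<Rightarrow> bool" where
  "generically sig K P \<longleftrightarrow> (\<exists>k U. k \<ge> 1 \<and>
     openin (top_of_set (crit_jet_space sig K k)) U \<and>
     crit_jet_space sig K k \<subseteq> closure U \<and>
     (\<forall>f. smooth f \<and> f 0 = 0 \<and> {q. critical sig f q} = K \<and> jet k f \<in> U \<longrightarrow> P f))"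

end

theory Submission
  imports Defs
begin


lemma core1:
  fixes S P K d0 :: real
  assumes S: "S > 0" and P: "P > 0" and K: "K \<ge> 0" and d0: "d0 > 0"
  shows "\<exists>\<delta>>0. \<delta> \<le> d0 \<and> (\<exists>e0>0. \<forall>\<epsilon> x. 0 < \<epsilon> \<and> \<epsilon> < e0 \<and> \<bar>x\<bar> < \<delta> \<longrightarrow>
     K*\<epsilon>^4 + K*\<epsilon>^2*\<bar>x\<bar> + K/2*(\<epsilon>^2+\<bar>x\<bar>)*x^2 < S*\<epsilon>^2 + P*x^2)"
proof -
  define \<eta> where "\<eta> = min S P / (4*(K+1))"
  have eta: "\<eta> > 0" using S P K by (simp add: \<eta>_def)
  have Keta: "K*\<eta> \<le> S/4" "K*\<eta> \<le> P/4"
  proof -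
    have "K*\<eta> \<le> (K+1)*\<eta>" using eta by simp
    also have "\<dots> = min S P / 4" using K by (simp add: \<eta>_def field_simps)
    finally show "K*\<eta> \<le> S/4" "K*\<eta> \<le> P/4" by auto
  qed
  define \<delta> where "\<delta> = min d0 (min 1 \<eta>)"
  have dpos: "\<delta> > 0" using d0 eta by (simp add: \<delta>_def)
  have d1: "\<delta> \<le> 1" "\<delta> \<le> \<eta>" "\<delta> \<le> d0" by (auto simp: \<delta>_def)
  have Kd: "K*\<delta> \<le> S/4" "K*\<delta> \<le> P/4"
    using mult_left_mono[OF d1(2) K] Keta by auto
  show ?thesis
  proof (intro exI[of _ \<delta>] conjI dpos d1(3) exI[of _ \<delta>] allI impI)
    fix \<epsilon> x :: real assume h: "0 < \<epsilon> \<and> \<epsilon> < \<delta> \<and> \<bar>x\<bar> < \<delta>"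
    have e2: "\<epsilon>^2 \<le> \<delta>" using h d1 by (smt (verit) mult_le_cancel_left1 power2_eq_square)
    have t1: "K*\<epsilon>^4 \<le> S/4*\<epsilon>^2"
    proof -
      have "K*\<epsilon>^4 = (K*\<epsilon>^2)*\<epsilon>^2" by (simp add: power_def)
      also have "\<dots> \<le> (K*\<delta>)*\<epsilon>^2" using e2 K by (intro mult_right_mono mult_left_mono) auto
      also have "\<dots> \<le> S/4*\<epsilon>^2" using Kd by (intro mult_right_mono) auto
      finally show ?thesis .
    qed
    have t2: "K*\<epsilon>^2*\<bar>x\<bar> \<le> S/4*\<epsilon>^2"
    proof -
      have "K*\<epsilon>^2*\<bar>x\<bar> = (K*\<bar>x\<bar>)*\<epsilon>^2" by simp
      also have "\<dots> \<le> (K*\<delta>)*\<epsilon>^2" using h K by (intro mult_right_mono mult_left_mono) auto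
      also have "\<dots> \<le> S/4*\<epsilon>^2" using Kd by (intro mult_right_mono) auto
      finally show ?thesis .
    qed
    have t3: "K/2*(\<epsilon>^2+\<bar>x\<bar>)*x^2 \<le> P/4*x^2"
    proof -
      have "K/2*(\<epsilon>^2+\<bar>x\<bar>) \<le> K/2*(2*\<delta>)" using h e2 K by (intro mult_left_mono) auto
      also have "\<dots> \<le> P/4" using Kd by simp
      finally show ?thesis by (intro mult_right_mono) auto
    qed
    have "0 < S/2*\<epsilon>^2" using S h by simp
    moreover have "0 \<le> P/2*x^2" using P by simp
    ultimately show "K*\<epsilon>^4 + K*\<epsilon>^2*\<bar>x\<bar> + K/2*(\<epsilon>^2+\<bar>x\<bar>)*x^2 < S*\<epsilon>^2 + P*x^2"
      using t1 t2 t3 by linarith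
  qed
qed


definition EE :: "real \<Rightarrow> real \<Rightarrow> real \<Rightarrow> real" where
  "EE K \<epsilon> y = K*\<epsilon>^4 + K*\<epsilon>^2*y + K/2*(\<epsilon>^2+y)*y^2"

lemma EE_mono: assumes "K \<ge> 0" "\<bar>x\<bar> \<le> y" shows "EE K \<epsilon> \<bar>x\<bar> \<le> EE K \<epsilon> y"
proof -
  have "x^2 \<le> y^2" using assms by (metis abs_ge_zero order.trans power2_abs power_mono)
  have "K*\<epsilon>^2*\<bar>x\<bar> \<le> K*\<epsilon>^2*y" using assms by (intro mult_left_mono) auto
  moreover have "K/2*(\<epsilon>^2+\<bar>x\<bar>)*x^2 \<le> K/2*(\<epsilon>^2+y)*y^2"
    using assms \<open>x^2 \<le> y^2\<close> by (intro mult_mono mult_left_mono) auto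
  ultimately show ?thesis unfolding EE_def power2_abs by linarith
qed

lemma EE_nonneg: "K \<ge> 0 \<Longrightarrow> y \<ge> 0 \<Longrightarrow> EE K \<epsilon> y \<ge> 0"
  unfolding EE_def by simp

lemma eps43: "0 \<le> \<epsilon> \<Longrightarrow> \<epsilon> \<le> 1 \<Longrightarrow> (\<epsilon>::real)^4 \<le> \<epsilon>^3"
  by (simp add: power_decreasing)

lemma EE_half: assumes K: "K \<ge> 0" and d: "d > 0" and e: "0 < \<epsilon>" "\<epsilon> \<le> 1"
  shows "EE K \<epsilon> (d*\<epsilon>/2) \<le> (K + K*d/2 + K*d^2/8 + K*d^3/16) * \<epsilon>^3"
proof -
  have eq: "EE K \<epsilon> (d*\<epsilon>/2) = K*\<epsilon>^4 + K*d/2*\<epsilon>^3 + K*d^2/8*\<epsilon>^4 + K*d^3/16*\<epsilon>^3"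
    unfolding EE_def by (simp add: power_def field_simps)
  have "K*\<epsilon>^4 \<le> K*\<epsilon>^3" "K*d^2/8*\<epsilon>^4 \<le> K*d^2/8*\<epsilon>^3"
    using eps43[of \<epsilon>] e K by (auto intro!: mult_left_mono)
  then show ?thesis unfolding eq by (simp add: algebra_simps)
qed

lemma EE_two: assumes K: "K \<ge> 0" and d: "d > 0" and e: "0 < \<epsilon>" "\<epsilon> \<le> 1"
  shows "EE K \<epsilon> (2*d*\<epsilon>) \<le> (K + 2*K*d + 2*K*d^2 + 4*K*d^3) * \<epsilon>^3"
proof -
  have eq: "EE K \<epsilon> (2*d*\<epsilon>) = K*\<epsilon>^4 + 2*K*d*\<epsilon>^3 + 2*K*d^2*\<epsilon>^4 + 4*K*d^3*\<epsilon>^3"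
    unfolding EE_def by (simp add: power_def field_simps)
  have "K*\<epsilon>^4 \<le> K*\<epsilon>^3" "2*K*d^2*\<epsilon>^4 \<le> 2*K*d^2*\<epsilon>^3"
    using eps43[of \<epsilon>] e K by (auto intro!: mult_left_mono)
  then show ?thesis unfolding eq by (simp add: algebra_simps)
qed


lemma core2:
  fixes S P K d0 :: real
  assumes S: "S < 0" and P: "P > 0" and K: "K \<ge> 0" and d0: "d0 > 0"
  shows "\<exists>\<delta>>0. \<delta> \<le> d0 \<and> (\<exists>e0>0. \<exists>C. \<forall>\<epsilon> \<phi> \<phi>'. 0 < \<epsilon> \<and> \<epsilon> < e0 \<and>
     (\<forall>x. \<bar>x\<bar> < d0 \<longrightarrow> DERIV \<phi> x :> \<phi>' x) \<and>
     (\<forall>x. \<bar>x\<bar> < d0 \<longrightarrow> \<bar>\<phi> x - (S*\<epsilon>^2+P*x^2)\<bar> \<le> EE K \<epsilon> \<bar>x\<bar>) \<and>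
     (\<forall>x. \<bar>x\<bar> < d0 \<longrightarrow> \<bar>\<phi>' x - 2*P*x\<bar> \<le> K*\<epsilon>^2 + K*(\<epsilon>^2+\<bar>x\<bar>)*\<bar>x\<bar>) \<longrightarrow>
     \<phi> 0 \<noteq> 0 \<and> (\<exists>!x. 0 < x \<and> x < \<delta> \<and> \<phi> x = 0) \<and>
     (\<forall>x. 0 < x \<and> x < \<delta> \<and> \<phi> x = 0 \<longrightarrow> \<bar>x - sqrt(-S/P)*\<epsilon>\<bar> \<le> C*\<epsilon>^2))"
proof -
  define T where "T = -S"
  have T: "T > 0" using S by (simp add: T_def)
  define d where "d = sqrt (-S/P)"
  have d: "d > 0" using S P by (simp add: d_def divide_neg_pos)
  have Pd2: "P*d^2 = T"
  proof -
    have "-S/P \<ge> 0" using S P by (simp add: divide_nonpos_pos)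
    then have "d^2 = -S/P" unfolding d_def by simp
    then show ?thesis using P by (simp add: T_def)
  qed
  define \<delta> where "\<delta> = min d0 (min 1 (P/(4*(K+1))))"
  have dpos: "\<delta> > 0" using d0 P K by (simp add: \<delta>_def)
  have d1: "\<delta> \<le> 1" "\<delta> \<le> d0" by (auto simp: \<delta>_def)
  have Kd: "K*\<delta> \<le> P/4"
  proof -
    have "K*\<delta> \<le> (K+1)*\<delta>" using dpos by simp
    also have "\<dots> \<le> (K+1)*(P/(4*(K+1)))" using K by (intro mult_left_mono) (auto simp: \<delta>_def)
    also have "\<dots> = P/4" using K by (simp add: field_simps)
    finally show ?thesis .
  qed
  define A1 where "A1 = K + K*d/2 + K*d^2/8 + K*d^3/16"
  define A2 where "A2 = K + 2*K*d + 2*K*d^2 + 4*K*d^3"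
  have A1: "A1 \<ge> 0" using K d by (simp add: A1_def)
  define e0 where "e0 = min 1 (min \<delta> (min (\<delta>/(4*d)) (min (T/(4*(A1+1))) (min (T/(2*(K+1))) (P*d/(2*(K+1)))))))"
  have e0pos: "e0 > 0" using dpos d T A1 K P by (simp add: e0_def)
  define C where "C = A2/(P*d)"
  show ?thesis
  proof (rule exI[of _ \<delta>], intro conjI dpos d1(2), rule exI[of _ e0], intro conjI e0pos, rule exI[of _ C], intro allI impI)
    fix \<epsilon> :: real and \<phi> \<phi>' :: "real \<Rightarrow> real"
    assume h: "0 < \<epsilon> \<and> \<epsilon> < e0 \<and>
     (\<forall>x. \<bar>x\<bar> < d0 \<longrightarrow> DERIV \<phi> x :> \<phi>' x) \<and>
     (\<forall>x. \<bar>x\<bar> < d0 \<longrightarrow> \<bar>\<phi> x - (S*\<epsilon>^2+P*x^2)\<bar> \<le> EE K \<epsilon> \<bar>x\<bar>) \<and>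
     (\<forall>x. \<bar>x\<bar> < d0 \<longrightarrow> \<bar>\<phi>' x - 2*P*x\<bar> \<le> K*\<epsilon>^2 + K*(\<epsilon>^2+\<bar>x\<bar>)*\<bar>x\<bar>)"
    then have e: "0 < \<epsilon>" "\<epsilon> < e0" and der: "\<And>x. \<bar>x\<bar> < d0 \<Longrightarrow> DERIV \<phi> x :> \<phi>' x"
      and val: "\<And>x. \<bar>x\<bar> < d0 \<Longrightarrow> \<bar>\<phi> x - (S*\<epsilon>^2+P*x^2)\<bar> \<le> EE K \<epsilon> \<bar>x\<bar>"
      and dv: "\<And>x. \<bar>x\<bar> < d0 \<Longrightarrow> \<bar>\<phi>' x - 2*P*x\<bar> \<le> K*\<epsilon>^2 + K*(\<epsilon>^2+\<bar>x\<bar>)*\<bar>x\<bar>"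
      by auto
    have e1: "\<epsilon> \<le> 1" "\<epsilon> \<le> \<delta>" "\<epsilon> \<le> \<delta>/(4*d)" "\<epsilon> \<le> T/(4*(A1+1))" "\<epsilon> \<le> T/(2*(K+1))"
      "\<epsilon> \<le> P*d/(2*(K+1))"
      using e unfolding e0_def by auto
    have de: "4*d*\<epsilon> \<le> \<delta>" using e1(3) d by (simp add: field_simps)
    have de0: "0 < d*\<epsilon>" using d e by simp
    have de2: "2*d*\<epsilon> \<le> \<delta>/2" using de by simp
    have A1e: "A1*\<epsilon> \<le> T/4"
    proof -
      have "A1*\<epsilon> \<le> (A1+1)*\<epsilon>" using e by simp
      also have "\<dots> \<le> (A1+1)*(T/(4*(A1+1)))" using A1 e1(4) by (intro mult_left_mono) auto
      also have "\<dots> = T/4" using A1 by (simp add: field_simps)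
      finally show ?thesis .
    qed
    have Ke1: "K*\<epsilon> \<le> T/2"
    proof -
      have "K*\<epsilon> \<le> (K+1)*\<epsilon>" using e by simp
      also have "\<dots> \<le> (K+1)*(T/(2*(K+1)))" using K e1(5) by (intro mult_left_mono) auto
      also have "\<dots> = T/2" using K by (simp add: field_simps)
      finally show ?thesis .
    qed
    have Ke2: "K*\<epsilon> \<le> P*d/2"
    proof -
      have "K*\<epsilon> \<le> (K+1)*\<epsilon>" using e by simp
      also have "\<dots> \<le> (K+1)*(P*d/(2*(K+1)))" using K e1(6) by (intro mult_left_mono) auto
      also have "\<dots> = P*d/2" using K by (simp add: field_simps)
      finally show ?thesis .
    qed
    have e2: "\<epsilon>^2 \<le> \<epsilon>" using e e1(1) by (simp add: power2_eq_square mult_le_cancel_right1)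
    have neg: "\<phi> x < 0" if x: "0 \<le> x" "x \<le> d*\<epsilon>/2" for x
    proof -
      have xd0: "\<bar>x\<bar> < d0" using x de d1 dpos d e by simp
      have "EE K \<epsilon> \<bar>x\<bar> \<le> EE K \<epsilon> (d*\<epsilon>/2)" using x K by (intro EE_mono) auto
      also have "\<dots> \<le> A1*\<epsilon>^3" unfolding A1_def using EE_half[OF K d e(1) e1(1)] .
      also have "\<dots> = (A1*\<epsilon>)*\<epsilon>^2" by (simp add: power_def)
      also have "\<dots> \<le> T/4*\<epsilon>^2" using A1e by (intro mult_right_mono) auto
      finally have E: "EE K \<epsilon> \<bar>x\<bar> \<le> T/4*\<epsilon>^2" .
      have "x^2 \<le> (d*\<epsilon>/2)^2" using x by (intro power_mono) auto
      then have "P*x^2 \<le> P*(d*\<epsilon>/2)^2" using P by simp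
      also have "\<dots> = T/4*\<epsilon>^2" using Pd2[symmetric] by (simp add: power2_eq_square)
      finally have "P*x^2 \<le> T/4*\<epsilon>^2" .
      moreover have "\<phi> x \<le> S*\<epsilon>^2+P*x^2 + EE K \<epsilon> \<bar>x\<bar>" using val[OF xd0] by linarith
      moreover have "0 < T*\<epsilon>^2" using e T by simp
      ultimately show ?thesis using E unfolding T_def by linarith
    qed
    have pos: "\<phi> x > 0" if x: "2*d*\<epsilon> \<le> x" "x < \<delta>" for x
    proof -
      have xp: "x > 0" using x de0 by linarith
      have xd0: "\<bar>x\<bar> < d0" using x xp d1 by simp
      have t1: "K*\<epsilon>^4 \<le> T/2*\<epsilon>^2"
      proof -
        have "K*\<epsilon>^4 = (K*\<epsilon>^2)*\<epsilon>^2" by (simp add: power_def)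
        also have "\<dots> \<le> (K*\<epsilon>)*\<epsilon>^2" using e2 K by (intro mult_right_mono mult_left_mono) auto
        also have "\<dots> \<le> T/2*\<epsilon>^2" using Ke1 by (intro mult_right_mono) auto
        finally show ?thesis .
      qed
      have t2: "K*\<epsilon>^2*x \<le> P/4*x^2"
      proof -
        have "K*\<epsilon>^2 = (K*\<epsilon>)*\<epsilon>" by (simp add: power_def)
        also have "\<dots> \<le> (P*d/2)*\<epsilon>" using Ke2 e by (intro mult_right_mono) auto
        also have "\<dots> = P/4*(2*d*\<epsilon>)" by simp
        also have "\<dots> \<le> P/4*x" using x P by (intro mult_left_mono) auto
        finally have "K*\<epsilon>^2*x \<le> P/4*x*x" using xp by (intro mult_right_mono) auto
        then show ?thesis by (simp add: power2_eq_square)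
      qed
      have t3: "K/2*(\<epsilon>^2+x)*x^2 \<le> P/4*x^2"
      proof -
        have "K/2*(\<epsilon>^2+x) \<le> K/2*(2*\<delta>)" using e2 e1 x K by (intro mult_left_mono) auto
        also have "\<dots> \<le> P/4" using Kd by simp
        finally show ?thesis by (intro mult_right_mono) auto
      qed
      have "(2*d*\<epsilon>)^2 \<le> x^2" using x d e by (intro power_mono) auto
      then have "P*(2*d*\<epsilon>)^2 \<le> P*x^2" using P by simp
      moreover have "P*(2*d*\<epsilon>)^2 = 4*T*\<epsilon>^2" using Pd2[symmetric] by (simp add: power_mult_distrib)
      moreover have "\<phi> x \<ge> S*\<epsilon>^2+P*x^2 - EE K \<epsilon> \<bar>x\<bar>" using val[OF xd0] by linarith
      moreover have "0 < T*\<epsilon>^2" using e T by simp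
      moreover have "\<bar>x\<bar> = x" using xp by simp
      ultimately show ?thesis using t1 t2 t3 unfolding EE_def T_def by linarith
    qed
    have dpos': "\<phi>' x > 0" if x: "d*\<epsilon>/2 \<le> x" "x \<le> 2*d*\<epsilon>" for x
    proof -
      have xp: "x > 0" using x de0 by linarith
      have xd: "x \<le> \<delta>" using x de2 dpos by linarith
      have xd0: "\<bar>x\<bar> < d0" using x xp de2 d1 dpos by linarith
      have "K*(\<epsilon>^2+x) \<le> K*(2*\<delta>)" using e2 e1 xd K by (intro mult_left_mono) auto
      also have "\<dots> \<le> P/2" using Kd by simp
      finally have "K*(\<epsilon>^2+x)*x \<le> P/2*x" using xp by (intro mult_right_mono) auto
      moreover have "K*\<epsilon>^2 \<le> (P*d/2)*\<epsilon>"
      proof -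
        have "K*\<epsilon>^2 = (K*\<epsilon>)*\<epsilon>" by (simp add: power_def)
        also have "\<dots> \<le> (P*d/2)*\<epsilon>" using Ke2 e by (intro mult_right_mono) auto
        finally show ?thesis .
      qed
      moreover have "P*(d*\<epsilon>/2) \<le> P*x" using x P by (intro mult_left_mono) auto
      moreover have "\<phi>' x \<ge> 2*P*x - (K*\<epsilon>^2 + K*(\<epsilon>^2+\<bar>x\<bar>)*\<bar>x\<bar>)" using dv[OF xd0] by linarith
      moreover have "0 < P*d*\<epsilon>" using P d e by simp
      ultimately show ?thesis using xp by (simp add: algebra_simps)
    qed
    have zero_loc: "d*\<epsilon>/2 < x \<and> x < 2*d*\<epsilon>" if x: "0 < x" "x < \<delta>" "\<phi> x = 0" for x
      using neg[of x] pos[of x] x by force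
    have cont: "isCont \<phi> x" if "0 \<le> x" "x \<le> \<delta>/2" for x
      using der[of x] that d1 dpos by (intro DERIV_isCont) auto
    have G1: "\<phi> 0 \<noteq> 0" using neg[of 0] d e by simp
    have G2: "\<exists>!x. 0 < x \<and> x < \<delta> \<and> \<phi> x = 0"
    proof (rule ex_ex1I)
      have "\<exists>x\<ge>d*\<epsilon>/2. x \<le> 2*d*\<epsilon> \<and> \<phi> x = 0"
      proof (rule IVT)
        show "\<phi> (d*\<epsilon>/2) \<le> 0" using neg[of "d*\<epsilon>/2"] d e by simp
        show "0 \<le> \<phi> (2*d*\<epsilon>)" using pos[of "2*d*\<epsilon>"] de2 dpos by simp
        show "d*\<epsilon>/2 \<le> 2*d*\<epsilon>" using d e by simp
        show "\<forall>x. d*\<epsilon>/2 \<le> x \<and> x \<le> 2*d*\<epsilon> \<longrightarrow> isCont \<phi> x"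
          using cont de2 de0 by auto
      qed
      then obtain x where "d*\<epsilon>/2 \<le> x" "x \<le> 2*d*\<epsilon>" "\<phi> x = 0" by auto
      moreover have "0 < d*\<epsilon>/2" using d e by simp
      ultimately show "\<exists>x. 0 < x \<and> x < \<delta> \<and> \<phi> x = 0" using de2 dpos
        by (intro exI[of _ x]) auto
    next
      fix x y assume hx: "0 < x \<and> x < \<delta> \<and> \<phi> x = 0" and hy: "0 < y \<and> y < \<delta> \<and> \<phi> y = 0"
      have lx: "d*\<epsilon>/2 < x \<and> x < 2*d*\<epsilon>" using zero_loc hx by blast
      have ly: "d*\<epsilon>/2 < y \<and> y < 2*d*\<epsilon>" using zero_loc hy by blast
      have inc: "\<phi> a < \<phi> b" if ab: "a < b" "d*\<epsilon>/2 < a" "b < 2*d*\<epsilon>" for a b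
      proof (rule DERIV_pos_imp_increasing[OF ab(1)])
        fix t assume t: "a \<le> t" "t \<le> b"
        have "\<bar>t\<bar> < d0" using t ab de2 d1 dpos de0 by linarith
        then show "\<exists>y. DERIV \<phi> t :> y \<and> y > 0" using der dpos'[of t] t ab by force
      qed
      show "x = y"
      proof (rule ccontr)
        assume "x \<noteq> y"
        then have "x < y \<or> y < x" by auto
        then show False using inc[of x y] inc[of y x] lx ly hx hy by auto
      qed
    qed
    have G3: "\<forall>x. 0 < x \<and> x < \<delta> \<and> \<phi> x = 0 \<longrightarrow> \<bar>x - sqrt (- S / P) * \<epsilon>\<bar> \<le> C * \<epsilon>\<^sup>2"
    proof (intro allI impI)
      fix x assume hx: "0 < x \<and> x < \<delta> \<and> \<phi> x = 0"
      have lx: "d*\<epsilon>/2 < x \<and> x < 2*d*\<epsilon>" using zero_loc hx by blast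
      have xd0: "\<bar>x\<bar> < d0" using hx d1 by simp
      have "\<bar>S*\<epsilon>^2+P*x^2\<bar> \<le> EE K \<epsilon> \<bar>x\<bar>" using val[OF xd0] hx by simp
      also have "\<dots> \<le> EE K \<epsilon> (2*d*\<epsilon>)" using lx hx K by (intro EE_mono) auto
      also have "\<dots> \<le> A2*\<epsilon>^3" unfolding A2_def using EE_two[OF K d e(1) e1(1)] .
      finally have b: "\<bar>S*\<epsilon>^2+P*x^2\<bar> \<le> A2*\<epsilon>^3" .
      have eq: "S*\<epsilon>^2+P*x^2 = P*(x+d*\<epsilon>)*(x - d*\<epsilon>)"
      proof -
        have "P*(x+d*\<epsilon>)*(x - d*\<epsilon>) = P*x^2 - (P*d^2)*\<epsilon>^2"
          by (simp add: algebra_simps power2_eq_square)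
        then show ?thesis using Pd2 unfolding T_def by simp
      qed
      have pos1: "P*(d*\<epsilon>) \<le> P*(x+d*\<epsilon>)" using hx P by simp
      have "P*(d*\<epsilon>)*\<bar>x - d*\<epsilon>\<bar> \<le> P*(x+d*\<epsilon>)*\<bar>x - d*\<epsilon>\<bar>"
        using pos1 by (intro mult_right_mono) auto
      also have "\<dots> = \<bar>S*\<epsilon>^2+P*x^2\<bar>" unfolding eq using hx P d e
        by (simp add: abs_mult)
      finally have "P*(d*\<epsilon>)*\<bar>x - d*\<epsilon>\<bar> \<le> A2*\<epsilon>^3" using b by linarith
      then have "\<bar>x - d*\<epsilon>\<bar> \<le> A2*\<epsilon>^3 / (P*(d*\<epsilon>))" using P d e
        by (simp add: field_simps)
      also have "\<dots> = C*\<epsilon>^2" unfolding C_def using P d e by (simp add: field_simps power_def)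
      finally show "\<bar>x - sqrt (- S / P) * \<epsilon>\<bar> \<le> C * \<epsilon>\<^sup>2" unfolding d_def .
    qed
    show "\<phi> 0 \<noteq> 0 \<and> (\<exists>!x. 0 < x \<and> x < \<delta> \<and> \<phi> x = 0) \<and>
     (\<forall>x. 0 < x \<and> x < \<delta> \<and> \<phi> x = 0 \<longrightarrow> \<bar>x - sqrt(-S/P)*\<epsilon>\<bar> \<le> C*\<epsilon>^2)"
      using G1 G2 G3 by blast
  qed
qed


lemma taylor2:
  fixes \<phi> \<phi>1 \<phi>2 :: "real \<Rightarrow> real"
  assumes d0: "\<bar>x\<bar> < d0"
    and der: "\<And>x. \<bar>x\<bar> < d0 \<Longrightarrow> DERIV \<phi> x :> \<phi>1 x \<and> DERIV \<phi>1 x :> \<phi>2 x"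
  shows "\<exists>t. \<bar>t\<bar> \<le> \<bar>x\<bar> \<and> \<phi> x = \<phi> 0 + \<phi>1 0 * x + \<phi>2 t / 2 * x^2"
proof (cases "x = 0")
  case True then show ?thesis by (intro exI[of _ 0]) auto
next
  case False
  define diff where "diff = (\<lambda>m::nat. if m = 0 then \<phi> else if m = 1 then \<phi>1 else \<phi>2)"
  have "\<exists>t. (if x < 0 then x < t \<and> t < 0 else 0 < t \<and> t < x) \<and>
    \<phi> x = (\<Sum>m<2. (diff m 0 / fact m) * (x - 0)^m) + (diff 2 t / fact 2) * (x - 0)^2"
  proof (rule Taylor[where a="-\<bar>x\<bar>" and b="\<bar>x\<bar>"])
    show "\<forall>m t. m < 2 \<and> - \<bar>x\<bar> \<le> t \<and> t \<le> \<bar>x\<bar> \<longrightarrow> DERIV (diff m) t :> diff (Suc m) t"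
    proof (intro allI impI)
      fix m t assume h: "m < (2::nat) \<and> - \<bar>x\<bar> \<le> t \<and> t \<le> \<bar>x\<bar>"
      then have "\<bar>t\<bar> < d0" using d0 by auto
      then show "DERIV (diff m) t :> diff (Suc m) t" using der h
        by (cases m) (auto simp: diff_def)
    qed
  qed (use False in \<open>auto simp: diff_def\<close>)
  then obtain t where t: "(if x < 0 then x < t \<and> t < 0 else 0 < t \<and> t < x)"
    and eq: "\<phi> x = (\<Sum>m<2. (diff m 0 / fact m) * (x - 0)^m) + (diff 2 t / fact 2) * (x - 0)^2"
    by blast
  have "\<bar>t\<bar> \<le> \<bar>x\<bar>" using t by (auto split: if_splits)
  moreover have "\<phi> x = \<phi> 0 + \<phi>1 0 * x + \<phi>2 t / 2 * x^2"
    using eq by (simp add: diff_def numeral_2_eq_2)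
  ultimately show ?thesis by blast
qed

lemma taylor1:
  fixes \<phi>1 \<phi>2 :: "real \<Rightarrow> real"
  assumes d0: "\<bar>x\<bar> < d0"
    and der: "\<And>x. \<bar>x\<bar> < d0 \<Longrightarrow> DERIV \<phi>1 x :> \<phi>2 x"
  shows "\<exists>t. \<bar>t\<bar> \<le> \<bar>x\<bar> \<and> \<phi>1 x = \<phi>1 0 + \<phi>2 t * x"
proof (cases "x = 0")
  case True then show ?thesis by (intro exI[of _ 0]) auto
next
  case False
  define diff where "diff = (\<lambda>m::nat. if m = 0 then \<phi>1 else \<phi>2)"
  have "\<exists>t. (if x < 0 then x < t \<and> t < 0 else 0 < t \<and> t < x) \<and>
    \<phi>1 x = (\<Sum>m<1. (diff m 0 / fact m) * (x - 0)^m) + (diff 1 t / fact 1) * (x - 0)^1"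
  proof (rule Taylor[where a="-\<bar>x\<bar>" and b="\<bar>x\<bar>"])
    show "\<forall>m t. m < 1 \<and> - \<bar>x\<bar> \<le> t \<and> t \<le> \<bar>x\<bar> \<longrightarrow> DERIV (diff m) t :> diff (Suc m) t"
    proof (intro allI impI)
      fix m t assume h: "m < (1::nat) \<and> - \<bar>x\<bar> \<le> t \<and> t \<le> \<bar>x\<bar>"
      then have "\<bar>t\<bar> < d0" using d0 by auto
      then show "DERIV (diff m) t :> diff (Suc m) t" using der h
        by (auto simp: diff_def)
    qed
  qed (use False in \<open>auto simp: diff_def\<close>)
  then obtain t where t: "(if x < 0 then x < t \<and> t < 0 else 0 < t \<and> t < x)"
    and eq: "\<phi>1 x = (\<Sum>m<1. (diff m 0 / fact m) * (x - 0)^m) + (diff 1 t / fact 1) * (x - 0)^1"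
    by blast
  have "\<bar>t\<bar> \<le> \<bar>x\<bar>" using t by (auto split: if_splits)
  moreover have "\<phi>1 x = \<phi>1 0 + \<phi>2 t * x"
    using eq by (simp add: diff_def)
  ultimately show ?thesis by blast
qed

lemma taylor_bounds:
  fixes \<phi> \<phi>1 \<phi>2 :: "real \<Rightarrow> real"
  assumes der: "\<And>x. \<bar>x\<bar> < d0 \<Longrightarrow> DERIV \<phi> x :> \<phi>1 x \<and> DERIV \<phi>1 x :> \<phi>2 x"
    and b0: "\<bar>\<phi> 0 - S*\<epsilon>^2\<bar> \<le> K*\<epsilon>^4" and b1: "\<bar>\<phi>1 0\<bar> \<le> K*\<epsilon>^2"
    and b2: "\<And>x. \<bar>x\<bar> < d0 \<Longrightarrow> \<bar>\<phi>2 x - 2*P\<bar> \<le> K*(\<epsilon>^2+\<bar>x\<bar>)" and K: "K \<ge> 0"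
    and x: "\<bar>x\<bar> < d0"
  shows "\<bar>\<phi> x - (S*\<epsilon>^2+P*x^2)\<bar> \<le> EE K \<epsilon> \<bar>x\<bar>"
    and "\<bar>\<phi>1 x - 2*P*x\<bar> \<le> K*\<epsilon>^2 + K*(\<epsilon>^2+\<bar>x\<bar>)*\<bar>x\<bar>"
proof -
  obtain t where t: "\<bar>t\<bar> \<le> \<bar>x\<bar>" and eq: "\<phi> x = \<phi> 0 + \<phi>1 0 * x + \<phi>2 t / 2 * x^2"
    using taylor2[OF x der] by blast
  have td: "\<bar>t\<bar> < d0" using t x by simp
  have "\<phi> x - (S*\<epsilon>^2+P*x^2) = (\<phi> 0 - S*\<epsilon>^2) + \<phi>1 0 * x + (\<phi>2 t - 2*P)/2 * x^2"
    unfolding eq by (simp add: field_simps)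
  also have "\<bar>\<dots>\<bar> \<le> \<bar>\<phi> 0 - S*\<epsilon>^2\<bar> + \<bar>\<phi>1 0\<bar> * \<bar>x\<bar> + \<bar>\<phi>2 t - 2*P\<bar>/2 * x^2"
  proof -
    have tri: "\<And>A B C::real. \<bar>A+B+C\<bar> \<le> \<bar>A\<bar>+\<bar>B\<bar>+\<bar>C\<bar>" by linarith
    show ?thesis using tri[of "\<phi> 0 - S*\<epsilon>^2" "\<phi>1 0 * x" "(\<phi>2 t - 2*P)/2 * x^2"]
      by (simp add: abs_mult)
  qed
  also have "\<dots> \<le> K*\<epsilon>^4 + K*\<epsilon>^2 * \<bar>x\<bar> + K*(\<epsilon>^2+\<bar>x\<bar>)/2 * x^2"
  proof -
    have "\<bar>\<phi>1 0\<bar> * \<bar>x\<bar> \<le> K*\<epsilon>^2 * \<bar>x\<bar>" using b1 by (intro mult_right_mono) auto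
    moreover have "\<bar>\<phi>2 t - 2*P\<bar> \<le> K*(\<epsilon>^2+\<bar>x\<bar>)"
      using b2[OF td] mult_left_mono[of "\<epsilon>^2+\<bar>t\<bar>" "\<epsilon>^2+\<bar>x\<bar>" K] t K by linarith
    then have "\<bar>\<phi>2 t - 2*P\<bar>/2 * x^2 \<le> K*(\<epsilon>^2+\<bar>x\<bar>)/2 * x^2"
      by (intro mult_right_mono divide_right_mono) auto
    ultimately show ?thesis using b0 by linarith
  qed
  finally show "\<bar>\<phi> x - (S*\<epsilon>^2+P*x^2)\<bar> \<le> EE K \<epsilon> \<bar>x\<bar>" unfolding EE_def by simp
next
  obtain t where t: "\<bar>t\<bar> \<le> \<bar>x\<bar>" and eq: "\<phi>1 x = \<phi>1 0 + \<phi>2 t * x"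
    using taylor1[OF x] der by blast
  have td: "\<bar>t\<bar> < d0" using t x by simp
  have "\<phi>1 x - 2*P*x = \<phi>1 0 + (\<phi>2 t - 2*P) * x" unfolding eq by (simp add: algebra_simps)
  also have "\<bar>\<dots>\<bar> \<le> \<bar>\<phi>1 0\<bar> + \<bar>\<phi>2 t - 2*P\<bar> * \<bar>x\<bar>"
    using abs_triangle_ineq[of "\<phi>1 0" "(\<phi>2 t - 2*P) * x"] by (simp add: abs_mult)
  also have "\<dots> \<le> K*\<epsilon>^2 + K*(\<epsilon>^2+\<bar>x\<bar>)*\<bar>x\<bar>"
  proof -
    have "\<bar>\<phi>2 t - 2*P\<bar> \<le> K*(\<epsilon>^2+\<bar>x\<bar>)"
      using b2[OF td] mult_left_mono[of "\<epsilon>^2+\<bar>t\<bar>" "\<epsilon>^2+\<bar>x\<bar>" K] t K by linarith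
    then have "\<bar>\<phi>2 t - 2*P\<bar> * \<bar>x\<bar> \<le> K*(\<epsilon>^2+\<bar>x\<bar>)*\<bar>x\<bar>" by (intro mult_right_mono) auto
    then show ?thesis using b1 by linarith
  qed
  finally show "\<bar>\<phi>1 x - 2*P*x\<bar> \<le> K*\<epsilon>^2 + K*(\<epsilon>^2+\<bar>x\<bar>)*\<bar>x\<bar>" .
qed


lemma pd_has_derivative:
  assumes "smooth f"
  shows "(pd f vs has_derivative (\<lambda>v. pd f (v#vs) z)) (at z)"
proof -
  have "pd f vs differentiable (at z)" using assms unfolding smooth_def by blast
  then have "(pd f vs has_derivative frechet_derivative (pd f vs) (at z)) (at z)"
    using frechet_derivative_works by blast
  moreover have "(\<lambda>v. pd f (v#vs) z) = frechet_derivative (pd f vs) (at z)" by (rule ext) simp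
  ultimately show ?thesis by simp
qed

lemma pd_linear:
  assumes "smooth f"
  shows "linear (\<lambda>v. pd f (v#vs) z)"
  using pd_has_derivative[OF assms] has_derivative_linear by blast

lemma pd_sum_first:
  assumes "smooth f" "finite A"
  shows "pd f ((\<Sum>s\<in>A. w s)#vs) z = (\<Sum>s\<in>A. pd f (w s#vs) z)"
  using linear_sum[OF pd_linear[OF assms(1)], of w A] by (simp del: pd.simps)

lemma pd_scale_first:
  assumes "smooth f"
  shows "pd f ((c *\<^sub>R v)#vs) z = c * pd f (v#vs) z"
  using linear_scale[OF pd_linear[OF assms(1)]] by (simp del: pd.simps)

lemma pd_add_first:
  assumes "smooth f"
  shows "pd f ((v + w)#vs) z = pd f (v#vs) z + pd f (w#vs) z"
  using linear_add[OF pd_linear[OF assms(1)]] by (simp del: pd.simps)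

lemma pd_expand:
  fixes f :: "'a::euclidean_space \<Rightarrow> real"
  assumes "smooth f"
  shows "pd f (v#vs) z = (\<Sum>b\<in>Basis. (v \<bullet> b) * pd f (b#vs) z)"
proof -
  have l: "linear (\<lambda>v. pd f (v#vs) z)" by (rule pd_linear[OF assms])
  have "pd f (v#vs) z = pd f ((\<Sum>b\<in>Basis. (v \<bullet> b) *\<^sub>R b)#vs) z"
    by (simp add: euclidean_representation)
  also have "\<dots> = (\<Sum>b\<in>Basis. (v \<bullet> b) * pd f (b#vs) z)"
    using pd_sum_first[OF assms, where w="\<lambda>b. (v \<bullet> b) *\<^sub>R b" and A=Basis and vs=vs and z=z]
      pd_scale_first[OF assms] by (simp del: pd.simps)
  finally show ?thesis .
qed

lemma pd_sum_second:
  assumes "smooth f" "finite A"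
  shows "pd f [v, (\<Sum>s\<in>A. w s)] z = (\<Sum>s\<in>A. pd f [v, w s] z)"
proof -
  have e: "pd f [(\<Sum>s\<in>A. w s)] = (\<lambda>z. \<Sum>s\<in>A. pd f [w s] z)"
    using pd_sum_first[OF assms, of w "[]"] by (intro ext) simp
  have "((\<lambda>z. \<Sum>s\<in>A. pd f [w s] z) has_derivative (\<lambda>v. \<Sum>s\<in>A. pd f [v, w s] z)) (at z)"
    by (intro has_derivative_sum pd_has_derivative[OF assms(1)])
  then have fd: "(\<lambda>v. \<Sum>s\<in>A. pd f [v, w s] z) = frechet_derivative (\<lambda>z. \<Sum>s\<in>A. pd f [w s] z) (at z)"
    by (rule frechet_derivative_at)
  have "pd f [v, (\<Sum>s\<in>A. w s)] z = frechet_derivative (pd f [(\<Sum>s\<in>A. w s)]) (at z) v"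
    by (simp only: pd.simps(2))
  also have "\<dots> = frechet_derivative (\<lambda>z. \<Sum>s\<in>A. pd f [w s] z) (at z) v" by (simp only: e)
  also have "\<dots> = (\<Sum>s\<in>A. pd f [v, w s] z)" by (simp only: fd[symmetric])
  finally show ?thesis .
qed

lemma pd_line_deriv:
  assumes "smooth f"
  shows "((\<lambda>t. pd f vs (z + t *\<^sub>R y)) has_real_derivative pd f (y#vs) (z + t *\<^sub>R y)) (at t)"
proof -
  have d1: "((\<lambda>t. z + t *\<^sub>R y) has_derivative (\<lambda>h. h *\<^sub>R y)) (at t)"
    by (auto intro!: derivative_eq_intros)
  have "((\<lambda>t. pd f vs (z + t *\<^sub>R y)) has_derivative (\<lambda>h. pd f ((h *\<^sub>R y)#vs) (z + t *\<^sub>R y))) (at t)"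
    using has_derivative_compose[OF d1 pd_has_derivative[OF assms]] by (simp add: o_def)
  then have "((\<lambda>t. pd f vs (z + t *\<^sub>R y)) has_derivative (\<lambda>h. pd f (y#vs) (z + t *\<^sub>R y) * h)) (at t)"
    by (simp del: pd.simps add: pd_scale_first[OF assms] mult.commute)
  then show ?thesis by (simp add: has_field_derivative_def)
qed


lemma pd_bound:
  fixes f :: "'a::euclidean_space \<Rightarrow> real"
  assumes "smooth f"
  shows "\<exists>C\<ge>0. \<forall>x\<in>cball 0 1. \<bar>pd f vs x\<bar> \<le> C"
proof -
  have "\<forall>x. isCont (pd f vs) x" using assms unfolding smooth_def
    by (blast intro: differentiable_imp_continuous_within)
  then have "continuous_on (cball 0 1) (pd f vs)" by (simp add: continuous_at_imp_continuous_on)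
  then have "compact (pd f vs ` cball 0 1)" by (intro compact_continuous_image) auto
  then have "bounded (pd f vs ` cball 0 1)" by (rule compact_imp_bounded)
  then obtain B where B: "B > 0" "\<forall>x\<in>pd f vs ` cball 0 1. norm x \<le> B"
    unfolding bounded_pos by blast
  have "\<forall>x\<in>cball 0 1. \<bar>pd f vs x\<bar> \<le> B"
  proof
    fix x :: 'a assume "x \<in> cball 0 1"
    then have "pd f vs x \<in> pd f vs ` cball 0 1" by (rule imageI)
    then show "\<bar>pd f vs x\<bar> \<le> B" using B(2) by (simp only: real_norm_def)
  qed
  then show ?thesis using B(1) by (intro exI[of _ B]) simp
qed

lemma pd_mvt:
  fixes f :: "'a::euclidean_space \<Rightarrow> real"
  assumes "smooth f"
  shows "\<exists>\<xi>. 0 < \<xi> \<and> \<xi> < 1 \<and> pd f vs y - pd f vs 0 = pd f (y#vs) (\<xi> *\<^sub>R y)"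
proof -
  have "\<exists>z::real. 0 < z \<and> z < 1 \<and> (pd f vs (0 + 1 *\<^sub>R y) - pd f vs (0 + 0 *\<^sub>R y) = (1 - 0) * pd f (y#vs) (0 + z *\<^sub>R y))"
    by (rule MVT2) (use pd_line_deriv[OF assms, where vs=vs and z=0 and y=y] in auto)
  then show ?thesis by simp
qed

lemma pd_lip:
  fixes f :: "'a::euclidean_space \<Rightarrow> real"
  assumes "smooth f"
  shows "\<exists>M\<ge>0. \<forall>y. norm y \<le> 1 \<longrightarrow> \<bar>pd f vs y - pd f vs 0\<bar> \<le> M * norm y"
proof -
  have "\<forall>b\<in>Basis. \<exists>C\<ge>0. \<forall>x\<in>cball 0 1. \<bar>pd f (b#vs) x\<bar> \<le> C"
    using pd_bound[OF assms] by blast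
  from bchoice[OF this] obtain C where C0: "\<forall>b\<in>Basis. C b \<ge> 0 \<and> (\<forall>x\<in>cball 0 1. \<bar>pd f (b#vs) x\<bar> \<le> C b)"
    by blast
  then have C: "\<And>b. b \<in> Basis \<Longrightarrow> C b \<ge> 0 \<and> (\<forall>x\<in>cball 0 1. \<bar>pd f (b#vs) x\<bar> \<le> C b)"
    by blast
  define M where "M = (\<Sum>b\<in>Basis. C b)"
  have M0: "M \<ge> 0" unfolding M_def using C by (simp add: sum_nonneg)
  show ?thesis
  proof (intro exI[of _ M] conjI M0 allI impI)
    fix y :: 'a assume y: "norm y \<le> 1"
    obtain \<xi> where xi: "0 < \<xi>" "\<xi> < 1" and eq: "pd f vs y - pd f vs 0 = pd f (y#vs) (\<xi> *\<^sub>R y)"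
      using pd_mvt[OF assms] by blast
    have inb: "\<xi> *\<^sub>R y \<in> cball 0 1" using xi y by (simp add: mult_le_one)
    have "\<bar>pd f (y#vs) (\<xi> *\<^sub>R y)\<bar> = \<bar>\<Sum>b\<in>Basis. (y \<bullet> b) * pd f (b#vs) (\<xi> *\<^sub>R y)\<bar>"
      by (subst pd_expand[OF assms]) (rule refl)
    also have "\<dots> \<le> (\<Sum>b\<in>Basis. \<bar>(y \<bullet> b) * pd f (b#vs) (\<xi> *\<^sub>R y)\<bar>)" by (rule sum_abs)
    also have "\<dots> \<le> (\<Sum>b\<in>Basis. norm y * C b)"
    proof (rule sum_mono)
      fix b :: 'a assume b: "b \<in> Basis"
      have "\<bar>y \<bullet> b\<bar> \<le> norm y" using b by (rule Basis_le_norm)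
      moreover have "\<bar>pd f (b#vs) (\<xi> *\<^sub>R y)\<bar> \<le> C b" using C[OF b] inb by blast
      ultimately show "\<bar>(y \<bullet> b) * pd f (b#vs) (\<xi> *\<^sub>R y)\<bar> \<le> norm y * C b"
        unfolding abs_mult by (intro mult_mono) auto
    qed
    also have "\<dots> = M * norm y" unfolding M_def by (simp add: sum_distrib_left mult.commute)
    finally show "\<bar>pd f vs y - pd f vs 0\<bar> \<le> M * norm y" by (simp only: eq)
  qed
qed


lemma pd_quad:
  fixes f :: "'a::euclidean_space \<Rightarrow> real"
  assumes "smooth f" "f 0 = 0"
  shows "\<exists>M\<ge>0. \<forall>y. norm y \<le> 1 \<longrightarrow> \<bar>f y - pd f [y] 0\<bar> \<le> M * (norm y)^2"
proof -
  have "\<forall>b\<in>Basis. \<exists>M\<ge>0. \<forall>y. norm y \<le> 1 \<longrightarrow> \<bar>pd f [b] y - pd f [b] 0\<bar> \<le> M * norm y"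
    using pd_lip[OF assms(1)] by blast
  from bchoice[OF this] obtain C where C0: "\<forall>b\<in>Basis. C b \<ge> 0 \<and> (\<forall>y. norm y \<le> 1 \<longrightarrow> \<bar>pd f [b] y - pd f [b] 0\<bar> \<le> C b * norm y)"
    by blast
  then have C: "\<And>b. b \<in> Basis \<Longrightarrow> C b \<ge> 0 \<and> (\<forall>y. norm y \<le> 1 \<longrightarrow> \<bar>pd f [b] y - pd f [b] 0\<bar> \<le> C b * norm y)"
    by blast
  define M where "M = (\<Sum>b\<in>Basis. C b)"
  have M0: "M \<ge> 0" unfolding M_def using C by (simp add: sum_nonneg)
  show ?thesis
  proof (intro exI[of _ M] conjI M0 allI impI)
    fix y :: 'a assume y: "norm y \<le> 1"
    obtain \<xi> where xi: "0 < \<xi>" "\<xi> < 1" and eq: "pd f [] y - pd f [] 0 = pd f [y] (\<xi> *\<^sub>R y)"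
      using pd_mvt[OF assms(1), of "[]" y] by blast
    have eq2: "f y = pd f [y] (\<xi> *\<^sub>R y)" using eq assms(2) by simp
    have ny: "norm (\<xi> *\<^sub>R y) \<le> norm y" using xi by (simp add: mult_left_le_one_le)
    have "pd f [y] (\<xi> *\<^sub>R y) - pd f [y] 0 = (\<Sum>b\<in>Basis. (y \<bullet> b) * (pd f [b] (\<xi> *\<^sub>R y) - pd f [b] 0))"
      by (simp only: pd_expand[OF assms(1), of y "[]"] sum_subtractf[symmetric] right_diff_distrib)
    also have "\<bar>\<dots>\<bar> \<le> (\<Sum>b\<in>Basis. \<bar>(y \<bullet> b) * (pd f [b] (\<xi> *\<^sub>R y) - pd f [b] 0)\<bar>)" by (rule sum_abs)
    also have "\<dots> \<le> (\<Sum>b\<in>Basis. norm y * (C b * norm y))"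
    proof (rule sum_mono)
      fix b :: 'a assume b: "b \<in> Basis"
      have "\<bar>y \<bullet> b\<bar> \<le> norm y" using b by (rule Basis_le_norm)
      moreover have "\<bar>pd f [b] (\<xi> *\<^sub>R y) - pd f [b] 0\<bar> \<le> C b * norm y"
      proof -
        have "norm (\<xi> *\<^sub>R y) \<le> 1" using ny y by linarith
        then have "\<bar>pd f [b] (\<xi> *\<^sub>R y) - pd f [b] 0\<bar> \<le> C b * norm (\<xi> *\<^sub>R y)"
          using C[OF b] by blast
        moreover have "C b * norm (\<xi> *\<^sub>R y) \<le> C b * norm y"
          using C[OF b] ny by (intro mult_left_mono) auto
        ultimately show ?thesis by linarith
      qed
      ultimately show "\<bar>(y \<bullet> b) * (pd f [b] (\<xi> *\<^sub>R y) - pd f [b] 0)\<bar> \<le> norm y * (C b * norm y)"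
        unfolding abs_mult by (intro mult_mono) auto
    qed
    also have "\<dots> = M * (norm y)^2" unfolding M_def
      by (simp add: sum_distrib_right[symmetric] power2_eq_square mult_ac)
    finally show "\<bar>f y - pd f [y] 0\<bar> \<le> M * (norm y)^2" by (simp only: eq2)
  qed
qed


lemma dirx_Basis: "dirx s \<in> (Basis :: ((real^'s::finite) \<times> real) set)"
  unfolding dirx_def Basis_prod_def by (auto simp: cart_eq_inner_axis)

lemma dirx_inj: "dirx s = dirx t \<longleftrightarrow> s = t"
  unfolding dirx_def by (auto simp: axis_eq_axis)

lemma mset_two_same: "mset ws = mset [a, a] \<Longrightarrow> ws = [a, a]"
proof -
  assume h: "mset ws = mset [a, a]"
  then have l: "length ws = 2" by (metis size_mset length_Cons list.size(3) numeral_2_eq_2)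
  have s: "set ws = {a}" using h by (metis set_mset_mset insert_absorb2 list.simps(15) empty_set)
  from l obtain x y where "ws = [x, y]"
    by (metis (no_types) One_nat_def Suc_1 length_0_conv length_Suc_conv)
  with s show ?thesis by auto
qed

lemma generic_from_Fsum:
  fixes sig :: "'s::finite \<Rightarrow> 'c::finite \<Rightarrow> 'c" and s1 :: 's
  assumes net: "network sig s1"
    and main: "\<And>f. smooth f \<Longrightarrow> f 0 = 0 \<Longrightarrow> Fsum sig f p \<noteq> 0 \<Longrightarrow> P f"
  shows "generically sig K P"
proof -
  define L where "L = Lset sig p"
  define G where "G = (\<lambda>c :: ((real^'s) \<times> real) list \<Rightarrow> real. \<Sum>s\<in>L. \<Sum>t\<in>L. c [dirx s, dirx t])"
  define X where "X = crit_jet_space sig K 2"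
  define U where "U = X \<inter> {c. G c \<noteq> 0}"
  have s1L: "s1 \<in> L" using net unfolding network_def L_def Lset_def by simp
  have contG: "continuous_on UNIV G" unfolding G_def
    by (intro continuous_intros continuous_on_product_coordinates)
  have openU: "openin (top_of_set X) U" unfolding U_def
    by (intro openin_open_Int open_Collect_neq contG continuous_on_const)
  have dense: "X \<subseteq> closure U"
  proof
    fix c assume cX: "c \<in> X"
    show "c \<in> closure U"
    proof (cases "G c = 0")
      case False
      then have "c \<in> U" using cX unfolding U_def by simp
      then show ?thesis using closure_subset by blast
    next
      case True
      define w where "w = [dirx s1, dirx s1 :: (real^'s) \<times> real]"
      define ct where "ct = (\<lambda>(r::real) vs. c vs + (if vs = w then r else 0))"
      have ctX: "ct r \<in> X" for r
      proof -
        have cj: "c \<in> jet_space 2" "c [] = 0" "\<forall>q. q \<in> K \<longleftrightarrow> (\<Sum>s\<in>Lset sig q. c [dirx s]) = 0"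
          using cX unfolding X_def crit_jet_space_def by auto
        have wB: "length w \<le> 2 \<and> set w \<subseteq> Basis" unfolding w_def using dirx_Basis by auto
        have "ct r \<in> jet_space 2" unfolding jet_space_def
        proof (intro CollectI conjI allI impI)
          fix vs :: "((real^'s) \<times> real) list" assume "\<not> (length vs \<le> 2 \<and> set vs \<subseteq> Basis)"
          moreover have "c vs = 0" using cj(1) \<open>\<not> (length vs \<le> 2 \<and> set vs \<subseteq> Basis)\<close> unfolding jet_space_def by blast
          moreover have "vs \<noteq> w" using wB \<open>\<not> (length vs \<le> 2 \<and> set vs \<subseteq> Basis)\<close> by blast
          ultimately show "ct r vs = 0" unfolding ct_def by simp
        next
          fix vs ws :: "((real^'s) \<times> real) list" assume m: "mset vs = mset ws"
          have "vs = w \<longleftrightarrow> ws = w"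
          proof
            assume "vs = w" then show "ws = w" using m mset_two_same[of ws] unfolding w_def by simp
          next
            assume "ws = w" then show "vs = w" using m mset_two_same[of vs] unfolding w_def by simp
          qed
          moreover have "c vs = c ws" using cj(1) m unfolding jet_space_def by blast
          ultimately show "ct r vs = ct r ws" unfolding ct_def by simp
        qed
        moreover have "ct r [] = 0" using cj(2) unfolding ct_def w_def by simp
        moreover have "\<And>s. ct r [dirx s] = c [dirx s]" unfolding ct_def w_def by simp
        ultimately show ?thesis using cj(3) unfolding X_def crit_jet_space_def by simp
      qed
      have Gct: "G (ct r) = G c + r" for r
      proof -
        have "G (ct r) = G c + (\<Sum>s\<in>L. \<Sum>t\<in>L. if [dirx s, dirx t] = w then r else 0)"
          unfolding G_def ct_def by (simp add: sum.distrib)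
        also have "(\<Sum>s\<in>L. \<Sum>t\<in>L. if [dirx s, dirx t] = w then r else 0) =
             (\<Sum>s\<in>L. if s = s1 then r else 0)"
          unfolding w_def by (intro sum.cong refl) (auto simp: dirx_inj s1L if_distrib sum.delta)
        also have "\<dots> = r" using s1L by (simp add: sum.delta)
        finally show ?thesis .
      qed
      have ev: "eventually (\<lambda>r. ct r \<in> U) (at_right 0)"
        unfolding U_def using ctX Gct True
        by (auto intro!: eventually_at_rightI[of 0 1])
      have cont: "continuous_on UNIV ct" unfolding ct_def
      proof (intro continuous_on_coordinatewise_then_product)
        fix i show "continuous_on UNIV (\<lambda>x. c i + (if i = w then x else 0))"
          by (cases "i = w") (auto intro!: continuous_intros)
      qed
      have "(ct \<longlongrightarrow> ct 0) (at_right 0)"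
        using cont by (metis UNIV_I continuous_on_def tendsto_within_subset subset_UNIV)
      moreover have "ct 0 = c" unfolding ct_def by auto
      ultimately have "(ct \<longlongrightarrow> c) (at_right 0)" by simp
      then show ?thesis using Lim_in_closed_set[OF closed_closure, of ct U "at_right 0" c] ev
        closure_subset by (auto intro: eventually_mono)
    qed
  qed
  show ?thesis unfolding generically_def
  proof (intro exI[of _ 2] exI[of _ U] conjI allI impI)
    show "openin (top_of_set (crit_jet_space sig K 2)) U" using openU unfolding X_def .
    show "crit_jet_space sig K 2 \<subseteq> closure U" using dense unfolding X_def .
  next
    fix f assume h: "smooth f \<and> f 0 = 0 \<and> {q. critical sig f q} = K \<and> jet 2 f \<in> U"
    have "G (jet 2 f) \<noteq> 0" using h unfolding U_def by simp
    moreover have "G (jet 2 f) = 2 * Fsum sig f p"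
      unfolding G_def Fsum_def fcoef_def L_def jet_def using dirx_Basis
      by (simp del: pd.simps add: sum_distrib_left dirx_Basis)
    ultimately show "P f" using h main by auto
  qed simp
qed


lemma core1g:
  fixes S P K d0 :: real
  assumes SP: "S/P > 0" and K: "K \<ge> 0" and d0: "d0 > 0"
  shows "\<exists>\<delta>>0. \<delta> \<le> d0 \<and> (\<exists>e0>0. \<forall>\<epsilon> \<phi>. 0 < \<epsilon> \<and> \<epsilon> < e0 \<and>
     (\<forall>x. \<bar>x\<bar> < d0 \<longrightarrow> \<bar>\<phi> x - (S*\<epsilon>^2+P*x^2)\<bar> \<le> EE K \<epsilon> \<bar>x\<bar>) \<longrightarrow>
     (\<forall>x. \<bar>x\<bar> < \<delta> \<longrightarrow> \<phi> x \<noteq> 0))"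
proof -
  have EEx: "EE K \<epsilon> \<bar>x\<bar> = K*\<epsilon>^4 + K*\<epsilon>^2*\<bar>x\<bar> + K/2*(\<epsilon>^2+\<bar>x\<bar>)*x^2" for \<epsilon> x
    unfolding EE_def by simp
  from SP have "(S > 0 \<and> P > 0) \<or> (S < 0 \<and> P < 0)" by (auto simp: zero_less_divide_iff)
  then show ?thesis
  proof
    assume h: "S > 0 \<and> P > 0"
    obtain \<delta> e0 where d: "\<delta> > 0" "\<delta> \<le> d0" "e0 > 0" and
      c: "\<And>\<epsilon> x. 0 < \<epsilon> \<and> \<epsilon> < e0 \<and> \<bar>x\<bar> < \<delta> \<Longrightarrow>
        K*\<epsilon>^4 + K*\<epsilon>^2*\<bar>x\<bar> + K/2*(\<epsilon>^2+\<bar>x\<bar>)*x^2 < S*\<epsilon>^2 + P*x^2"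
      using core1[of S P K d0] h K d0 by blast
    have main: "\<forall>(\<epsilon>::real) (\<phi>::real\<Rightarrow>real). 0 < \<epsilon> \<and> \<epsilon> < e0 \<and>
     (\<forall>x. \<bar>x\<bar> < d0 \<longrightarrow> \<bar>\<phi> x - (S*\<epsilon>^2+P*x^2)\<bar> \<le> EE K \<epsilon> \<bar>x\<bar>) \<longrightarrow>
     (\<forall>x. \<bar>x\<bar> < \<delta> \<longrightarrow> \<phi> x \<noteq> 0)"
    proof -
      have "\<phi> x \<noteq> 0" if a: "0 < \<epsilon> \<and> \<epsilon> < e0 \<and> (\<forall>x. \<bar>x\<bar> < d0 \<longrightarrow> \<bar>\<phi> x - (S*\<epsilon>^2+P*x^2)\<bar> \<le> EE K \<epsilon> \<bar>x\<bar>)"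
        and x: "\<bar>x\<bar> < \<delta>" for \<epsilon> :: real and \<phi> :: "real \<Rightarrow> real" and x :: real
      proof -
      have "\<bar>\<phi> x - (S*\<epsilon>^2+P*x^2)\<bar> \<le> EE K \<epsilon> \<bar>x\<bar>" using a x d by auto
      moreover have "EE K \<epsilon> \<bar>x\<bar> < S*\<epsilon>^2 + P*x^2" using c[of \<epsilon> x] a x unfolding EEx by blast
      ultimately show "\<phi> x \<noteq> 0" by auto
    qed
    then show ?thesis by blast
    qed
    show ?thesis using main d by blast
  next
    assume h: "S < 0 \<and> P < 0"
    obtain \<delta> e0 where d: "\<delta> > 0" "\<delta> \<le> d0" "e0 > 0" and
      c: "\<And>\<epsilon> x. 0 < \<epsilon> \<and> \<epsilon> < e0 \<and> \<bar>x\<bar> < \<delta> \<Longrightarrow>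
        K*\<epsilon>^4 + K*\<epsilon>^2*\<bar>x\<bar> + K/2*(\<epsilon>^2+\<bar>x\<bar>)*x^2 < (-S)*\<epsilon>^2 + (-P)*x^2"
      using core1[of "-S" "-P" K d0] h K d0 by auto
    have main: "\<forall>(\<epsilon>::real) (\<phi>::real\<Rightarrow>real). 0 < \<epsilon> \<and> \<epsilon> < e0 \<and>
     (\<forall>x. \<bar>x\<bar> < d0 \<longrightarrow> \<bar>\<phi> x - (S*\<epsilon>^2+P*x^2)\<bar> \<le> EE K \<epsilon> \<bar>x\<bar>) \<longrightarrow>
     (\<forall>x. \<bar>x\<bar> < \<delta> \<longrightarrow> \<phi> x \<noteq> 0)"
    proof -
      have "\<phi> x \<noteq> 0" if a: "0 < \<epsilon> \<and> \<epsilon> < e0 \<and> (\<forall>x. \<bar>x\<bar> < d0 \<longrightarrow> \<bar>\<phi> x - (S*\<epsilon>^2+P*x^2)\<bar> \<le> EE K \<epsilon> \<bar>x\<bar>)"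
        and x: "\<bar>x\<bar> < \<delta>" for \<epsilon> :: real and \<phi> :: "real \<Rightarrow> real" and x :: real
      proof -
      have "\<bar>\<phi> x - (S*\<epsilon>^2+P*x^2)\<bar> \<le> EE K \<epsilon> \<bar>x\<bar>" using a x d by auto
      moreover have "EE K \<epsilon> \<bar>x\<bar> < (-S)*\<epsilon>^2 + (-P)*x^2" using c[of \<epsilon> x] a x unfolding EEx by blast
      ultimately show "\<phi> x \<noteq> 0" by auto
    qed
    then show ?thesis by blast
    qed
    show ?thesis using main d by blast
  qed
qed

lemma core2g:
  fixes S P K d0 :: real
  assumes SP: "S/P < 0" and K: "K \<ge> 0" and d0: "d0 > 0"
  shows "\<exists>\<delta>>0. \<delta> \<le> d0 \<and> (\<exists>e0>0. \<exists>C. \<forall>\<epsilon> \<phi> \<phi>'. 0 < \<epsilon> \<and> \<epsilon> < e0 \<and>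
     (\<forall>x. \<bar>x\<bar> < d0 \<longrightarrow> DERIV \<phi> x :> \<phi>' x) \<and>
     (\<forall>x. \<bar>x\<bar> < d0 \<longrightarrow> \<bar>\<phi> x - (S*\<epsilon>^2+P*x^2)\<bar> \<le> EE K \<epsilon> \<bar>x\<bar>) \<and>
     (\<forall>x. \<bar>x\<bar> < d0 \<longrightarrow> \<bar>\<phi>' x - 2*P*x\<bar> \<le> K*\<epsilon>^2 + K*(\<epsilon>^2+\<bar>x\<bar>)*\<bar>x\<bar>) \<longrightarrow>
     \<phi> 0 \<noteq> 0 \<and> (\<exists>!x. 0 < x \<and> x < \<delta> \<and> \<phi> x = 0) \<and>
     (\<forall>x. 0 < x \<and> x < \<delta> \<and> \<phi> x = 0 \<longrightarrow> \<bar>x - sqrt(-S/P)*\<epsilon>\<bar> \<le> C*\<epsilon>^2))"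
proof -
  from SP have "(S < 0 \<and> P > 0) \<or> (S > 0 \<and> P < 0)" by (auto simp: divide_less_0_iff)
  then show ?thesis
  proof
    assume h: "S < 0 \<and> P > 0"
    then show ?thesis using core2[of S P K d0] K d0 by blast
  next
    assume h: "S > 0 \<and> P < 0"
    have pre: "-S < 0" "-P > 0" using h by auto
    obtain \<delta> e0 C where d: "\<delta> > 0" "\<delta> \<le> d0" "e0 > 0" and
      c: "\<And>\<epsilon> \<phi> \<phi>'. 0 < \<epsilon> \<and> \<epsilon> < e0 \<and>
     (\<forall>x. \<bar>x\<bar> < d0 \<longrightarrow> DERIV \<phi> x :> \<phi>' x) \<and>
     (\<forall>x. \<bar>x\<bar> < d0 \<longrightarrow> \<bar>\<phi> x - ((-S)*\<epsilon>^2+(-P)*x^2)\<bar> \<le> EE K \<epsilon> \<bar>x\<bar>) \<and>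
     (\<forall>x. \<bar>x\<bar> < d0 \<longrightarrow> \<bar>\<phi>' x - 2*(-P)*x\<bar> \<le> K*\<epsilon>^2 + K*(\<epsilon>^2+\<bar>x\<bar>)*\<bar>x\<bar>) \<Longrightarrow>
     \<phi> 0 \<noteq> 0 \<and> (\<exists>!x. 0 < x \<and> x < \<delta> \<and> \<phi> x = 0) \<and>
     (\<forall>x. 0 < x \<and> x < \<delta> \<and> \<phi> x = 0 \<longrightarrow> \<bar>x - sqrt(-(-S)/(-P))*\<epsilon>\<bar> \<le> C*\<epsilon>^2)"
      using core2[OF pre K d0] by blast
    show ?thesis
    proof (rule exI[of _ \<delta>], intro conjI d, rule exI[of _ e0], intro conjI d, rule exI[of _ C], intro allI impI)
      fix \<epsilon> and \<phi> \<phi>' :: "real \<Rightarrow> real"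
      assume a: "0 < \<epsilon> \<and> \<epsilon> < e0 \<and>
     (\<forall>x. \<bar>x\<bar> < d0 \<longrightarrow> DERIV \<phi> x :> \<phi>' x) \<and>
     (\<forall>x. \<bar>x\<bar> < d0 \<longrightarrow> \<bar>\<phi> x - (S*\<epsilon>^2+P*x^2)\<bar> \<le> EE K \<epsilon> \<bar>x\<bar>) \<and>
     (\<forall>x. \<bar>x\<bar> < d0 \<longrightarrow> \<bar>\<phi>' x - 2*P*x\<bar> \<le> K*\<epsilon>^2 + K*(\<epsilon>^2+\<bar>x\<bar>)*\<bar>x\<bar>)"
      have h1: "\<forall>x. \<bar>x\<bar> < d0 \<longrightarrow> DERIV (\<lambda>x. - \<phi> x) x :> - \<phi>' x"
        using a by (auto intro: DERIV_minus)
      have h2: "\<forall>x. \<bar>x\<bar> < d0 \<longrightarrow> \<bar>- \<phi> x - ((-S)*\<epsilon>^2+(-P)*x^2)\<bar> \<le> EE K \<epsilon> \<bar>x\<bar>"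
      proof (intro allI impI)
        fix x :: real assume "\<bar>x\<bar> < d0"
        then have "\<bar>\<phi> x - (S*\<epsilon>^2+P*x^2)\<bar> \<le> EE K \<epsilon> \<bar>x\<bar>" using a by blast
        then show "\<bar>- \<phi> x - ((-S)*\<epsilon>^2+(-P)*x^2)\<bar> \<le> EE K \<epsilon> \<bar>x\<bar>" by linarith
      qed
      have h3: "\<forall>x. \<bar>x\<bar> < d0 \<longrightarrow> \<bar>- \<phi>' x - 2*(-P)*x\<bar> \<le> K*\<epsilon>^2 + K*(\<epsilon>^2+\<bar>x\<bar>)*\<bar>x\<bar>"
      proof (intro allI impI)
        fix x :: real assume "\<bar>x\<bar> < d0"
        then have "\<bar>\<phi>' x - 2*P*x\<bar> \<le> K*\<epsilon>^2 + K*(\<epsilon>^2+\<bar>x\<bar>)*\<bar>x\<bar>" using a by blast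
        then show "\<bar>- \<phi>' x - 2*(-P)*x\<bar> \<le> K*\<epsilon>^2 + K*(\<epsilon>^2+\<bar>x\<bar>)*\<bar>x\<bar>" by linarith
      qed
      have r: "- \<phi> 0 \<noteq> 0 \<and> (\<exists>!x. 0 < x \<and> x < \<delta> \<and> - \<phi> x = 0) \<and>
     (\<forall>x. 0 < x \<and> x < \<delta> \<and> - \<phi> x = 0 \<longrightarrow> \<bar>x - sqrt(-(-S)/(-P))*\<epsilon>\<bar> \<le> C*\<epsilon>^2)"
        using c[of \<epsilon> "\<lambda>x. - \<phi> x" "\<lambda>x. - \<phi>' x"] a h1 h2 h3 by blast
      then show "\<phi> 0 \<noteq> 0 \<and> (\<exists>!x. 0 < x \<and> x < \<delta> \<and> \<phi> x = 0) \<and>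
     (\<forall>x. 0 < x \<and> x < \<delta> \<and> \<phi> x = 0 \<longrightarrow> \<bar>x - sqrt(-S/P)*\<epsilon>\<bar> \<le> C*\<epsilon>^2)"
        by simp
    qed
  qed
qed


lemma key_bounds:
  fixes F :: "'a::euclidean_space \<Rightarrow> real" and u :: "real \<Rightarrow> 'a" and \<epsilon> :: "real \<Rightarrow> real"
  assumes sm: "smooth F" and F0: "F 0 = 0" and e1: "pd F [e] 0 = 0" and e2: "pd F [e,e] 0 = 2*P"
    and K1: "K1 \<ge> 0" and ev1: "eventually (\<lambda>l. norm (u l) \<le> K1 * \<epsilon> l^2) (at_right 0)"
    and K2: "K2 \<ge> 0" and ev2: "eventually (\<lambda>l. \<bar>pd F [u l] 0 - S*\<epsilon> l^2\<bar> \<le> K2*\<epsilon> l^4) (at_right 0)"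
    and lim: "(\<epsilon> \<longlongrightarrow> 0) (at_right 0)"
  shows "\<exists>K\<ge>0. \<exists>d0>0. eventually (\<lambda>l.
     (\<forall>x. \<bar>x\<bar> < d0 \<longrightarrow> DERIV (\<lambda>x. F (u l + x *\<^sub>R e)) x :> pd F [e] (u l + x *\<^sub>R e)) \<and>
     (\<forall>x. \<bar>x\<bar> < d0 \<longrightarrow> \<bar>F (u l + x *\<^sub>R e) - (S*\<epsilon> l^2 + P*x^2)\<bar> \<le> EE K (\<epsilon> l) \<bar>x\<bar>) \<and>
     (\<forall>x. \<bar>x\<bar> < d0 \<longrightarrow> \<bar>pd F [e] (u l + x *\<^sub>R e) - 2*P*x\<bar> \<le> K*\<epsilon> l^2 + K*(\<epsilon> l^2+\<bar>x\<bar>)*\<bar>x\<bar>))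
     (at_right 0)"
proof -
  obtain Me where Me: "Me \<ge> 0" "\<And>y. norm y \<le> 1 \<Longrightarrow> \<bar>pd F [e] y - pd F [e] 0\<bar> \<le> Me * norm y"
    using pd_lip[OF sm, of "[e]"] by blast
  obtain Mee where Mee: "Mee \<ge> 0" "\<And>y. norm y \<le> 1 \<Longrightarrow> \<bar>pd F [e,e] y - pd F [e,e] 0\<bar> \<le> Mee * norm y"
    using pd_lip[OF sm, of "[e,e]"] by blast
  obtain Mf where Mf: "Mf \<ge> 0" "\<And>y. norm y \<le> 1 \<Longrightarrow> \<bar>F y - pd F [y] 0\<bar> \<le> Mf * (norm y)^2"
    using pd_quad[OF sm F0] by blast
  define K where "K = Mf*K1^2 + K2 + Me*K1 + Mee*K1 + Mee*norm e"
  have K0: "K \<ge> 0" unfolding K_def using Me Mee Mf K1 K2 by simp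
  define d0 where "d0 = 1/(2*(norm e + 1))"
  have ne: "0 < norm e + 1" using norm_ge_zero[of e] by linarith
  have d0: "d0 > 0" unfolding d0_def using ne by (intro divide_pos_pos mult_pos_pos) auto
  have d0e: "d0 * norm e \<le> 1/2"
  proof -
    have "d0 * norm e = (norm e / (norm e + 1)) / 2" unfolding d0_def by simp
    also have "norm e / (norm e + 1) \<le> 1" using ne by simp
    finally show ?thesis by simp
  qed
  have "((\<lambda>l. K1 * \<epsilon> l^2) \<longlongrightarrow> K1 * 0^2) (at_right 0)" by (intro tendsto_intros lim)
  then have ev3: "eventually (\<lambda>l. K1 * \<epsilon> l^2 < 1/2) (at_right 0)"
    by (intro order_tendstoD(2)) auto
  have ev: "eventually (\<lambda>l.
     (\<forall>x. \<bar>x\<bar> < d0 \<longrightarrow> DERIV (\<lambda>x. F (u l + x *\<^sub>R e)) x :> pd F [e] (u l + x *\<^sub>R e)) \<and>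
     (\<forall>x. \<bar>x\<bar> < d0 \<longrightarrow> \<bar>F (u l + x *\<^sub>R e) - (S*\<epsilon> l^2 + P*x^2)\<bar> \<le> EE K (\<epsilon> l) \<bar>x\<bar>) \<and>
     (\<forall>x. \<bar>x\<bar> < d0 \<longrightarrow> \<bar>pd F [e] (u l + x *\<^sub>R e) - 2*P*x\<bar> \<le> K*\<epsilon> l^2 + K*(\<epsilon> l^2+\<bar>x\<bar>)*\<bar>x\<bar>))
     (at_right 0)"
      using ev1 ev2 ev3
    proof eventually_elim
      case (elim l)
      define v where "v = u l"
      define \<eta> where "\<eta> = \<epsilon> l"
      have v1: "norm v \<le> K1 * \<eta>^2" and v2: "\<bar>pd F [v] 0 - S*\<eta>^2\<bar> \<le> K2*\<eta>^4" and v3: "K1*\<eta>^2 < 1/2"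
        using elim unfolding v_def \<eta>_def by auto
      have nv: "norm v \<le> 1/2" using v1 v3 by linarith
      have nx: "norm (v + x *\<^sub>R e) \<le> K1*\<eta>^2 + \<bar>x\<bar> * norm e" and nx1: "norm (v + x *\<^sub>R e) \<le> 1"
        if x: "\<bar>x\<bar> < d0" for x
      proof -
        have "norm (v + x *\<^sub>R e) \<le> norm v + \<bar>x\<bar> * norm e" using norm_triangle_ineq[of v "x *\<^sub>R e"] by simp
        then show "norm (v + x *\<^sub>R e) \<le> K1*\<eta>^2 + \<bar>x\<bar> * norm e" using v1 by linarith
        have "\<bar>x\<bar> * norm e \<le> d0 * norm e" using x by (intro mult_right_mono) auto
        then show "norm (v + x *\<^sub>R e) \<le> 1" using \<open>norm (v + x *\<^sub>R e) \<le> norm v + \<bar>x\<bar> * norm e\<close> nv d0e by linarith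
      qed
      have der: "DERIV (\<lambda>x. F (v + x *\<^sub>R e)) x :> pd F [e] (v + x *\<^sub>R e) \<and>
                 DERIV (\<lambda>x. pd F [e] (v + x *\<^sub>R e)) x :> pd F [e,e] (v + x *\<^sub>R e)" for x
        using pd_line_deriv[OF sm, where vs="[]" and z=v and y=e and t=x]
          pd_line_deriv[OF sm, where vs="[e]" and z=v and y=e and t=x]
        by (simp only: pd.simps(1))
      have b0: "\<bar>F (v + 0 *\<^sub>R e) - S*\<eta>^2\<bar> \<le> K*\<eta>^4"
      proof -
        have "\<bar>F v - pd F [v] 0\<bar> \<le> Mf * (norm v)^2" using Mf(2) nv by simp
        also have "\<dots> \<le> Mf * (K1*\<eta>^2)^2" using Mf(1) v1 by (intro mult_left_mono power_mono) auto
        also have "\<dots> = Mf*K1^2*\<eta>^4" by (simp add: power_mult_distrib flip: power_mult)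
        finally have "\<bar>F v - S*\<eta>^2\<bar> \<le> Mf*K1^2*\<eta>^4 + K2*\<eta>^4" using v2 by linarith
        also have "\<dots> \<le> K*\<eta>^4" unfolding K_def using Me Mee K1 by (simp add: algebra_simps)
        finally show ?thesis by simp
      qed
      have b1: "\<bar>pd F [e] (v + 0 *\<^sub>R e)\<bar> \<le> K*\<eta>^2"
      proof -
        have "\<bar>pd F [e] v\<bar> \<le> Me * norm v" using Me(2)[of v] nv e1 by simp
        also have "\<dots> \<le> Me * (K1*\<eta>^2)" using Me(1) v1 by (intro mult_left_mono) auto
        also have "\<dots> \<le> K*\<eta>^2" unfolding K_def using Mf Mee K1 K2
          by (simp add: algebra_simps)
        finally show ?thesis by simp
      qed
      have b2: "\<bar>pd F [e,e] (v + x *\<^sub>R e) - 2*P\<bar> \<le> K*(\<eta>^2+\<bar>x\<bar>)" if x: "\<bar>x\<bar> < d0" for x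
      proof -
        have "\<bar>pd F [e,e] (v + x *\<^sub>R e) - 2*P\<bar> \<le> Mee * norm (v + x *\<^sub>R e)"
          using Mee(2)[OF nx1[OF x]] e2 by simp
        also have "\<dots> \<le> Mee * (K1*\<eta>^2 + \<bar>x\<bar> * norm e)" using Mee(1) nx[OF x] by (intro mult_left_mono) auto
        also have "\<dots> = (Mee*K1)*\<eta>^2 + (Mee*norm e)*\<bar>x\<bar>" by (simp add: algebra_simps)
        also have "\<dots> \<le> K*\<eta>^2 + K*\<bar>x\<bar>"
        proof -
          have "Mee*K1 \<le> K" "Mee*norm e \<le> K" unfolding K_def using Mf Me Mee K1 K2
            by (simp_all add: algebra_simps)
          then show ?thesis by (intro add_mono mult_right_mono) auto
        qed
        finally show ?thesis by (simp add: algebra_simps)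
      qed
      have tb: "\<bar>F (v + x *\<^sub>R e) - (S*\<eta>^2+P*x^2)\<bar> \<le> EE K \<eta> \<bar>x\<bar>"
        "\<bar>pd F [e] (v + x *\<^sub>R e) - 2*P*x\<bar> \<le> K*\<eta>^2 + K*(\<eta>^2+\<bar>x\<bar>)*\<bar>x\<bar>" if x: "\<bar>x\<bar> < d0" for x
        using taylor_bounds[where \<phi>="\<lambda>x. F (v + x *\<^sub>R e)" and ?\<phi>1.0="\<lambda>x. pd F [e] (v + x *\<^sub>R e)"
            and ?\<phi>2.0="\<lambda>x. pd F [e,e] (v + x *\<^sub>R e)" and ?d0.0=d0 and S=S and \<epsilon>=\<eta> and K=K and P=P and x=x,
            OF der b0 b1 b2 K0 x] by auto
      show ?case using der tb unfolding v_def \<eta>_def by blast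
    qed
  show ?thesis using ev K0 d0 by blast
qed


lemma analytic_i:
  fixes g :: "real \<Rightarrow> real \<Rightarrow> real" and \<epsilon> :: "real \<Rightarrow> real"
  assumes K: "K \<ge> 0" and d0: "d0 > 0"
    and ev: "eventually (\<lambda>l. \<forall>x. \<bar>x\<bar> < d0 \<longrightarrow> \<bar>g l x - (S*\<epsilon> l^2+P*x^2)\<bar> \<le> EE K (\<epsilon> l) \<bar>x\<bar>) (at_right 0)"
    and SP: "S/P > 0" and lim: "(\<epsilon> \<longlongrightarrow> 0) (at_right 0)" and pos: "eventually (\<lambda>l. \<epsilon> l > 0) (at_right 0)"
  shows "\<exists>\<delta>>0. eventually (\<lambda>l. \<forall>x. \<bar>x\<bar> < \<delta> \<longrightarrow> g l x \<noteq> 0) (at_right 0)"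
proof -
  obtain \<delta> e0 where d: "\<delta> > 0" "e0 > 0" and
    c: "\<And>\<epsilon> \<phi>. 0 < \<epsilon> \<and> \<epsilon> < e0 \<and>
     (\<forall>x. \<bar>x\<bar> < d0 \<longrightarrow> \<bar>\<phi> x - (S*\<epsilon>^2+P*x^2)\<bar> \<le> EE K \<epsilon> \<bar>x\<bar>) \<Longrightarrow>
     (\<forall>x. \<bar>x\<bar> < \<delta> \<longrightarrow> \<phi> x \<noteq> 0)"
    using core1g[OF SP K d0] by blast
  have "eventually (\<lambda>l. \<epsilon> l < e0) (at_right 0)" using lim d(2) by (rule order_tendstoD(2))
  then have "eventually (\<lambda>l. \<forall>x. \<bar>x\<bar> < \<delta> \<longrightarrow> g l x \<noteq> 0) (at_right 0)"
    using ev pos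
  proof eventually_elim
    case (elim l)
    then show ?case using c[of "\<epsilon> l" "g l"] by blast
  qed
  then show ?thesis using d(1) by blast
qed

lemma analytic_ii:
  fixes g g' :: "real \<Rightarrow> real \<Rightarrow> real" and \<epsilon> :: "real \<Rightarrow> real"
  assumes K: "K \<ge> 0" and d0: "d0 > 0"
    and ev: "eventually (\<lambda>l.
     (\<forall>x. \<bar>x\<bar> < d0 \<longrightarrow> DERIV (g l) x :> g' l x) \<and>
     (\<forall>x. \<bar>x\<bar> < d0 \<longrightarrow> \<bar>g l x - (S*\<epsilon> l^2+P*x^2)\<bar> \<le> EE K (\<epsilon> l) \<bar>x\<bar>) \<and>
     (\<forall>x. \<bar>x\<bar> < d0 \<longrightarrow> \<bar>g' l x - 2*P*x\<bar> \<le> K*\<epsilon> l^2 + K*(\<epsilon> l^2+\<bar>x\<bar>)*\<bar>x\<bar>)) (at_right 0)"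
    and SP: "S/P < 0" and lim: "(\<epsilon> \<longlongrightarrow> 0) (at_right 0)" and pos: "eventually (\<lambda>l. \<epsilon> l > 0) (at_right 0)"
  shows "\<exists>\<delta>>0. \<exists>C. eventually (\<lambda>l. g l 0 \<noteq> 0 \<and>
     (\<exists>!x. 0 < x \<and> x < \<delta> \<and> g l x = 0) \<and>
     (\<forall>x. 0 < x \<and> x < \<delta> \<and> g l x = 0 \<longrightarrow> \<bar>x - sqrt(-S/P)*\<epsilon> l\<bar> \<le> C*\<epsilon> l^2) \<and>
     (\<exists>!x. -\<delta> < x \<and> x < 0 \<and> g l x = 0) \<and>
     (\<forall>x. -\<delta> < x \<and> x < 0 \<and> g l x = 0 \<longrightarrow> \<bar>x + sqrt(-S/P)*\<epsilon> l\<bar> \<le> C*\<epsilon> l^2)) (at_right 0)"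
proof -
  obtain \<delta> e0 C where d: "\<delta> > 0" "e0 > 0" and
    c: "\<And>\<epsilon> \<phi> \<phi>'. 0 < \<epsilon> \<and> \<epsilon> < e0 \<and>
     (\<forall>x. \<bar>x\<bar> < d0 \<longrightarrow> DERIV \<phi> x :> \<phi>' x) \<and>
     (\<forall>x. \<bar>x\<bar> < d0 \<longrightarrow> \<bar>\<phi> x - (S*\<epsilon>^2+P*x^2)\<bar> \<le> EE K \<epsilon> \<bar>x\<bar>) \<and>
     (\<forall>x. \<bar>x\<bar> < d0 \<longrightarrow> \<bar>\<phi>' x - 2*P*x\<bar> \<le> K*\<epsilon>^2 + K*(\<epsilon>^2+\<bar>x\<bar>)*\<bar>x\<bar>) \<Longrightarrow>
     \<phi> 0 \<noteq> 0 \<and> (\<exists>!x. 0 < x \<and> x < \<delta> \<and> \<phi> x = 0) \<and>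
     (\<forall>x. 0 < x \<and> x < \<delta> \<and> \<phi> x = 0 \<longrightarrow> \<bar>x - sqrt(-S/P)*\<epsilon>\<bar> \<le> C*\<epsilon>^2)"
    using core2g[OF SP K d0] by blast
  have "eventually (\<lambda>l. \<epsilon> l < e0) (at_right 0)" using lim d(2) by (rule order_tendstoD(2))
  then have "eventually (\<lambda>l. g l 0 \<noteq> 0 \<and>
     (\<exists>!x. 0 < x \<and> x < \<delta> \<and> g l x = 0) \<and>
     (\<forall>x. 0 < x \<and> x < \<delta> \<and> g l x = 0 \<longrightarrow> \<bar>x - sqrt(-S/P)*\<epsilon> l\<bar> \<le> C*\<epsilon> l^2) \<and>
     (\<exists>!x. -\<delta> < x \<and> x < 0 \<and> g l x = 0) \<and>
     (\<forall>x. -\<delta> < x \<and> x < 0 \<and> g l x = 0 \<longrightarrow> \<bar>x + sqrt(-S/P)*\<epsilon> l\<bar> \<le> C*\<epsilon> l^2)) (at_right 0)"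
    using ev pos
  proof eventually_elim
    case (elim l)
    define \<eta> where "\<eta> = \<epsilon> l"
    define \<phi> where "\<phi> = g l"
    define \<phi>' where "\<phi>' = g' l"
    have h: "0 < \<eta> \<and> \<eta> < e0 \<and>
     (\<forall>x. \<bar>x\<bar> < d0 \<longrightarrow> DERIV \<phi> x :> \<phi>' x) \<and>
     (\<forall>x. \<bar>x\<bar> < d0 \<longrightarrow> \<bar>\<phi> x - (S*\<eta>^2+P*x^2)\<bar> \<le> EE K \<eta> \<bar>x\<bar>) \<and>
     (\<forall>x. \<bar>x\<bar> < d0 \<longrightarrow> \<bar>\<phi>' x - 2*P*x\<bar> \<le> K*\<eta>^2 + K*(\<eta>^2+\<bar>x\<bar>)*\<bar>x\<bar>)"
      using elim unfolding \<eta>_def \<phi>_def \<phi>'_def by blast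
    have r1: "\<phi> 0 \<noteq> 0 \<and> (\<exists>!x. 0 < x \<and> x < \<delta> \<and> \<phi> x = 0) \<and>
     (\<forall>x. 0 < x \<and> x < \<delta> \<and> \<phi> x = 0 \<longrightarrow> \<bar>x - sqrt(-S/P)*\<eta>\<bar> \<le> C*\<eta>^2)"
      using c[OF h] .
    have h2: "0 < \<eta> \<and> \<eta> < e0 \<and>
     (\<forall>x. \<bar>x\<bar> < d0 \<longrightarrow> DERIV (\<lambda>x. \<phi> (-x)) x :> - \<phi>' (-x)) \<and>
     (\<forall>x. \<bar>x\<bar> < d0 \<longrightarrow> \<bar>\<phi> (-x) - (S*\<eta>^2+P*x^2)\<bar> \<le> EE K \<eta> \<bar>x\<bar>) \<and>
     (\<forall>x. \<bar>x\<bar> < d0 \<longrightarrow> \<bar>- \<phi>' (-x) - 2*P*x\<bar> \<le> K*\<eta>^2 + K*(\<eta>^2+\<bar>x\<bar>)*\<bar>x\<bar>)"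
    proof (intro conjI allI impI)
      show "0 < \<eta>" "\<eta> < e0" using h by auto
    next
      fix x :: real assume x: "\<bar>x\<bar> < d0"
      then have "DERIV \<phi> (-x) :> \<phi>' (-x)" using h by simp
      then show "DERIV (\<lambda>x. \<phi> (-x)) x :> - \<phi>' (-x)" by (simp add: DERIV_mirror)
    next
      fix x :: real assume x: "\<bar>x\<bar> < d0"
      then have "\<bar>\<phi> (-x) - (S*\<eta>^2+P*(-x)^2)\<bar> \<le> EE K \<eta> \<bar>-x\<bar>" using h by (metis abs_minus_cancel)
      then show "\<bar>\<phi> (-x) - (S*\<eta>^2+P*x^2)\<bar> \<le> EE K \<eta> \<bar>x\<bar>" by simp
    next
      fix x :: real assume x: "\<bar>x\<bar> < d0"
      then have "\<bar>\<phi>' (-x) - 2*P*(-x)\<bar> \<le> K*\<eta>^2 + K*(\<eta>^2+\<bar>-x\<bar>)*\<bar>-x\<bar>" using h by (metis abs_minus_cancel)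
      then show "\<bar>- \<phi>' (-x) - 2*P*x\<bar> \<le> K*\<eta>^2 + K*(\<eta>^2+\<bar>x\<bar>)*\<bar>x\<bar>" by (simp add: abs_minus_commute)
    qed
    have r2: "\<phi> (-0) \<noteq> 0 \<and> (\<exists>!x. 0 < x \<and> x < \<delta> \<and> \<phi> (-x) = 0) \<and>
     (\<forall>x. 0 < x \<and> x < \<delta> \<and> \<phi> (-x) = 0 \<longrightarrow> \<bar>x - sqrt(-S/P)*\<eta>\<bar> \<le> C*\<eta>^2)"
      using c[OF h2] .
    have n1: "\<exists>!x. -\<delta> < x \<and> x < 0 \<and> \<phi> x = 0"
    proof -
      obtain y where y: "0 < y \<and> y < \<delta> \<and> \<phi> (-y) = 0"
        and yu: "\<And>z. 0 < z \<and> z < \<delta> \<and> \<phi> (-z) = 0 \<Longrightarrow> z = y" using r2 by blast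
      show ?thesis
      proof (rule ex1I[of _ "-y"])
        show "-\<delta> < -y \<and> -y < 0 \<and> \<phi> (-y) = 0" using y by auto
      next
        fix x assume "-\<delta> < x \<and> x < 0 \<and> \<phi> x = 0"
        then have "-x = y" using yu[of "-x"] by auto
        then show "x = -y" by simp
      qed
    qed
    have n2: "\<forall>x. -\<delta> < x \<and> x < 0 \<and> \<phi> x = 0 \<longrightarrow> \<bar>x + sqrt(-S/P)*\<eta>\<bar> \<le> C*\<eta>^2"
    proof (intro allI impI)
      fix x assume "-\<delta> < x \<and> x < 0 \<and> \<phi> x = 0"
      then have "\<bar>-x - sqrt(-S/P)*\<eta>\<bar> \<le> C*\<eta>^2" using r2 by auto
      then show "\<bar>x + sqrt(-S/P)*\<eta>\<bar> \<le> C*\<eta>^2" by (simp add: abs_minus_commute add.commute)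
    qed
    show ?case using r1 n1 n2 unfolding \<eta>_def \<phi>_def by blast
  qed
  then show ?thesis using d(1) by blast
qed


lemma eps_facts:
  fixes X :: nat and l :: real
  assumes X: "X \<ge> 1" and l: "0 < l" "l < 1"
  defines "\<epsilon> \<equiv> l powr (2 powr -(real X + 1))"
  shows "\<epsilon>^2 = l powr (2 powr - real X)" "\<epsilon>^4 = l powr (2 powr -(real X - 1))"
    "\<epsilon>^4 \<le> \<epsilon>^2" "l \<le> \<epsilon>^4" "\<epsilon> > 0"
proof -
  have sq: "(l powr a)^2 = l powr (2*a)" for a
    using l by (simp add: powr_realpow[symmetric] powr_powr mult.commute)
  have e2: "2 * 2 powr (-(real X + 1)) = (2::real) powr (- real X)"
  proof -
    have "(2::real) powr (1 + (-(real X + 1))) = 2 powr 1 * 2 powr (-(real X + 1))" by (rule powr_add)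
    moreover have "1 + (-(real X + 1)) = - real X" by simp
    ultimately show ?thesis by simp
  qed
  show E2: "\<epsilon>^2 = l powr (2 powr - real X)" unfolding \<epsilon>_def sq e2 ..
  have e4: "2 * 2 powr (- real X) = (2::real) powr (-(real X - 1))"
  proof -
    have "(2::real) powr (1 + (- real X)) = 2 powr 1 * 2 powr (- real X)" by (rule powr_add)
    moreover have "1 + (- real X) = -(real X - 1)" by simp
    ultimately show ?thesis by simp
  qed
  have "\<epsilon>^4 = (\<epsilon>^2)^2" by simp
  also have "\<dots> = l powr (2 powr -(real X - 1))" unfolding E2 sq e4 ..
  finally show E4: "\<epsilon>^4 = l powr (2 powr -(real X - 1))" .
  have "l powr (2 powr -(real X - 1)) \<le> l powr (2 powr - real X)"
    using l by (intro powr_mono' powr_mono) auto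
  then show "\<epsilon>^4 \<le> \<epsilon>^2" unfolding E2 E4 .
  have "(2::real) powr -(real X - 1) \<le> 2 powr 0" using X by (intro powr_mono) auto
  then have "l powr 1 \<le> l powr (2 powr -(real X - 1))" using l by (intro powr_mono') auto
  then show "l \<le> \<epsilon>^4" unfolding E4 using l by simp
  show "\<epsilon> > 0" unfolding \<epsilon>_def using l by simp
qed

lemma qbound:
  fixes sig :: "'s::finite \<Rightarrow> 'c \<Rightarrow> 'c" and X :: nat
  assumes H: "hyp_H sig p xs d xi" and q: "net_above sig q p" and xq: "xi q \<le> X" and X: "X \<ge> 1"
  defines "\<epsilon> \<equiv> \<lambda>l::real. l powr (2 powr -(real X + 1))"
  shows "\<exists>C\<ge>0. eventually (\<lambda>l. \<bar>xs q l\<bar> \<le> C * \<epsilon> l^2 \<and>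
    (if xi q = X then \<bar>xs q l - d q * \<epsilon> l^2\<bar> \<le> C * \<epsilon> l^4 else \<bar>xs q l\<bar> \<le> C * \<epsilon> l^4)) (at_right 0)"
proof -
  have "(\<lambda>lam. xs q lam - d q * lam powr (2 powr (- real (xi q))))
       \<in> O[at_right 0](\<lambda>lam. lam powr (2 powr (- (real (xi q) - 1))))"
    using H q unfolding hyp_H_def by blast
  then obtain c where c: "c > 0" and evc: "eventually (\<lambda>l. norm (xs q l - d q * l powr (2 powr (- real (xi q))))
       \<le> c * norm (l powr (2 powr (- (real (xi q) - 1))))) (at_right 0)"
    by (elim landau_o.bigE)
  have ev01: "eventually (\<lambda>l::real. 0 < l \<and> l < 1) (at_right 0)"
    by (rule eventually_at_rightI[of 0 1]) auto
  define C where "C = \<bar>d q\<bar> + c"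
  have C0: "C \<ge> 0" unfolding C_def using c by simp
  show ?thesis
  proof (intro exI[of _ C] conjI C0)
    show "eventually (\<lambda>l. \<bar>xs q l\<bar> \<le> C * \<epsilon> l^2 \<and>
      (if xi q = X then \<bar>xs q l - d q * \<epsilon> l^2\<bar> \<le> C * \<epsilon> l^4 else \<bar>xs q l\<bar> \<le> C * \<epsilon> l^4)) (at_right 0)"
      using evc ev01
    proof eventually_elim
      case (elim l)
      define A where "A = l powr (2 powr (- real (xi q)))"
      define B where "B = l powr (2 powr (- (real (xi q) - 1)))"
      have l: "0 < l" "l < 1" using elim by auto
      have ef: "\<epsilon> l^2 = l powr (2 powr - real X)" "\<epsilon> l^4 = l powr (2 powr -(real X - 1))"
        "\<epsilon> l^4 \<le> \<epsilon> l^2" "l \<le> \<epsilon> l^4" "\<epsilon> l > 0"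
        unfolding \<epsilon>_def using eps_facts[OF X l(1) l(2)] by auto
      have A0: "A \<ge> 0" "B \<ge> 0" unfolding A_def B_def by auto
      have bd: "\<bar>xs q l - d q * A\<bar> \<le> c * B" using elim unfolding A_def B_def by simp
      have BA: "B \<le> A" unfolding A_def B_def using l by (intro powr_mono' powr_mono) auto
      have xsb: "\<bar>xs q l\<bar> \<le> \<bar>d q\<bar> * A + c * B"
      proof -
        have "\<bar>xs q l\<bar> \<le> \<bar>xs q l - d q * A\<bar> + \<bar>d q * A\<bar>" by linarith
        then show ?thesis using bd A0 by (simp add: abs_mult)
      qed
      have xsA: "\<bar>xs q l\<bar> \<le> C * A"
      proof -
        have "c * B \<le> c * A" using BA c by (intro mult_left_mono) auto
        then show ?thesis using xsb unfolding C_def by (simp add: algebra_simps)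
      qed
      show ?case
      proof (cases "xi q = X")
        case True
        have AE: "A = \<epsilon> l^2" and BE: "B = \<epsilon> l^4"
          unfolding A_def B_def using ef l True by auto
        have "c * \<epsilon> l^4 \<le> C * \<epsilon> l^4" unfolding C_def by (intro mult_right_mono) auto
        then show ?thesis using True xsA bd AE BE by simp
      next
        case False
        then have xq1: "real (xi q) \<le> real X - 1" using xq by linarith
        have "A \<le> l powr (2 powr -(real X - 1))" unfolding A_def using l xq1
          by (intro powr_mono' powr_mono) auto
        then have A4: "A \<le> \<epsilon> l^4" using ef l by simp
        have x4: "\<bar>xs q l\<bar> \<le> C * \<epsilon> l^4" using xsA A4 C0 by (meson mult_left_mono order_trans)
        moreover have "C * \<epsilon> l^4 \<le> C * \<epsilon> l^2" using ef l C0 by (intro mult_left_mono) auto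
        ultimately show ?thesis using False by simp
      qed
    qed
  qed
qed


lemma u_decomp:
  fixes v :: "'s::finite \<Rightarrow> real"
  shows "((\<chi> s. v s, l) :: (real^'s) \<times> real) = (\<Sum>s\<in>UNIV. v s *\<^sub>R dirx s) + l *\<^sub>R (0, 1)"
proof -
  have a: "(\<Sum>s\<in>UNIV. v s *\<^sub>R dirx s) = ((\<Sum>s\<in>UNIV. v s *\<^sub>R axis s (1::real)), 0::real)"
    by (simp add: dirx_def prod_eq_iff fst_sum snd_sum)
  have b: "(\<Sum>s\<in>UNIV. v s *\<^sub>R axis s (1::real)) = (\<chi> s. v s)"
    using basis_expansion[of "\<chi> s. v s"] by (simp add: scalar_mult_eq_scaleR)
  show ?thesis unfolding a b by simp
qed

lemma e_decomp:
  fixes sig :: "'s::finite \<Rightarrow> 'c \<Rightarrow> 'c"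
  shows "((\<chi> s. if sig s p = p then 1 else 0, 0) :: (real^'s) \<times> real) = (\<Sum>s\<in>Lset sig p. dirx s)"
proof -
  have a: "(\<Sum>s\<in>Lset sig p. dirx s) = ((\<Sum>s\<in>Lset sig p. axis s (1::real)), 0::real)"
    by (simp add: dirx_def prod_eq_iff fst_sum snd_sum)
  have b: "(\<Sum>s\<in>Lset sig p. axis s (1::real)) = (\<chi> s. if sig s p = p then 1 else 0)"
  unfolding vec_eq_iff
  proof
    fix i
    have "(\<Sum>s\<in>Lset sig p. axis s (1::real)) $ i = (\<Sum>s\<in>Lset sig p. axis s (1::real) $ i)"
      by (rule sum_component)
    also have "\<dots> = (\<Sum>s\<in>Lset sig p. if s = i then 1 else 0)"
      by (intro sum.cong refl) (auto simp: axis_def)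
    also have "\<dots> = (if sig i p = p then 1 else 0)" by (simp add: Lset_def)
    finally show "(\<Sum>s\<in>Lset sig p. axis s (1::real)) $ i = (\<chi> s. if sig s p = p then 1 else 0) $ i"
      by simp
  qed
  show ?thesis unfolding a b by simp
qed

lemma peq_eq:
  fixes sig :: "'s::finite \<Rightarrow> 'c \<Rightarrow> 'c"
  shows "peq sig f p xs x l = f ((\<chi> s. if sig s p = p then 0 else xs (sig s p) l, l) +
      x *\<^sub>R ((\<chi> s. if sig s p = p then 1 else 0, 0) :: (real^'s) \<times> real))"
  unfolding peq_def by (rule arg_cong[where f=f]) (simp add: prod_eq_iff vec_eq_iff)

lemma net_above_sig:
  assumes "sig s p \<noteq> p" shows "net_above sig (sig s p) p"
  unfolding net_above_def net_le_def edges_def using assms by auto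


lemma sbound:
  fixes sig :: "'s::finite \<Rightarrow> 'c::finite \<Rightarrow> 'c"
  assumes H: "hyp_H sig p xs d xi" and X: "Xi sig p xi \<ge> 1"
  shows "\<exists>C\<ge>0. eventually (\<lambda>l.
     \<bar>(if sig s p = p then 0 else xs (sig s p) l)\<bar> \<le> C * (l powr (2 powr -(real (Xi sig p xi) + 1)))^2 \<and>
     \<bar>(if sig s p = p then 0 else xs (sig s p) l) -
       (if sig s p \<in> Qset sig p xi then d (sig s p) * (l powr (2 powr -(real (Xi sig p xi) + 1)))^2 else 0)\<bar>
       \<le> C * (l powr (2 powr -(real (Xi sig p xi) + 1)))^4) (at_right 0)"
proof (cases "sig s p = p")
  case True
  have "p \<notin> Qset sig p xi" unfolding Qset_def Sig_star_def by auto
  then show ?thesis using True by (intro exI[of _ 0]) auto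
next
  case False
  define q where "q = sig s p"
  have qS: "q \<in> Sig_star sig p" unfolding q_def Sig_star_def Sig_of_def using False by auto
  have xq: "xi q \<le> Xi sig p xi" unfolding Xi_def using qS by (intro Max_ge) auto
  obtain C where C: "C \<ge> 0" and evC: "eventually (\<lambda>l. \<bar>xs q l\<bar> \<le> C * (l powr (2 powr -(real (Xi sig p xi) + 1)))^2 \<and>
    (if xi q = Xi sig p xi then \<bar>xs q l - d q * (l powr (2 powr -(real (Xi sig p xi) + 1)))^2\<bar> \<le> C * (l powr (2 powr -(real (Xi sig p xi) + 1)))^4
     else \<bar>xs q l\<bar> \<le> C * (l powr (2 powr -(real (Xi sig p xi) + 1)))^4)) (at_right 0)"
    using qbound[OF H net_above_sig[where sig=sig and s=s and p=p, OF False] xq[unfolded q_def] X] unfolding q_def by auto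
  have Q: "q \<in> Qset sig p xi \<longleftrightarrow> xi q = Xi sig p xi" unfolding Qset_def using qS by auto
  show ?thesis
  proof (intro exI[of _ C] conjI C)
    show "eventually (\<lambda>l.
     \<bar>(if sig s p = p then 0 else xs (sig s p) l)\<bar> \<le> C * (l powr (2 powr -(real (Xi sig p xi) + 1)))^2 \<and>
     \<bar>(if sig s p = p then 0 else xs (sig s p) l) -
       (if sig s p \<in> Qset sig p xi then d (sig s p) * (l powr (2 powr -(real (Xi sig p xi) + 1)))^2 else 0)\<bar>
       \<le> C * (l powr (2 powr -(real (Xi sig p xi) + 1)))^4) (at_right 0)"
      using evC
    proof eventually_elim
      case (elim l)
      then show ?case using False Q unfolding q_def[symmetric] by (cases "xi q = Xi sig p xi") auto
    qed
  qed
qed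


lemma P_holds:
  fixes sig :: "'s::finite \<Rightarrow> 'c::finite \<Rightarrow> 'c" and f :: "'s resp"
    and xs :: "'c \<Rightarrow> real \<Rightarrow> real" and d :: "'c \<Rightarrow> real" and xi :: "'c \<Rightarrow> nat"
  assumes sm: "smooth f" and f0: "f 0 = 0" and Fs: "Fsum sig f p \<noteq> 0" and crit: "critical sig f p"
    and H: "hyp_H sig p xs d xi" and SN: "cond_SN sig f p d xi"
  shows "(let c = SNsum sig f p d xi / Fsum sig f p; X = Xi sig p xi in
         (c > 0 \<longrightarrow>
            (\<exists>\<delta>>0. \<forall>\<^sub>F lam in at_right 0. \<forall>x. \<bar>x\<bar> < \<delta> \<longrightarrow> peq sig f p xs x lam \<noteq> 0)) \<and>
         (c < 0 \<longrightarrow>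
            (let dplus = sqrt (- c); dminus = - sqrt (- c) in
              dplus \<noteq> 0 \<and> dminus \<noteq> 0 \<and>
              (\<exists>xp xm :: real \<Rightarrow> real.
                 (\<forall>\<^sub>F lam in at_right 0.
                    peq sig f p xs (xp lam) lam = 0 \<and> peq sig f p xs (xm lam) lam = 0) \<and>
                 (\<lambda>lam. xp lam - dplus * lam powr (2 powr (- (real X + 1))))
                   \<in> O[at_right 0](\<lambda>lam. lam powr (2 powr (- real X))) \<and>
                 (\<lambda>lam. xm lam - dminus * lam powr (2 powr (- (real X + 1))))
                   \<in> O[at_right 0](\<lambda>lam. lam powr (2 powr (- real X))) \<and>
                 (\<exists>\<delta>>0. \<forall>\<^sub>F lam in at_right 0. \<forall>x.
                    \<bar>x\<bar> < \<delta> \<and> peq sig f p xs x lam = 0 \<longrightarrow> x = xp lam \<or> x = xm lam)))))"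
proof -
  define X where "X = Xi sig p xi"
  have X1: "X \<ge> 1" using SN unfolding cond_SN_def X_def by simp
  define \<epsilon> where "\<epsilon> = (\<lambda>l::real. l powr (2 powr -(real X + 1)))"
  define us where "us = (\<lambda>s l. if sig s p = p then 0 else xs (sig s p) l)"
  define ts where "ts = (\<lambda>s l. if sig s p \<in> Qset sig p xi then d (sig s p) * \<epsilon> l^2 else 0)"
  define S where "S = SNsum sig f p d xi"
  define P where "P = Fsum sig f p"
  have "\<forall>s. \<exists>C\<ge>0. eventually (\<lambda>l. \<bar>us s l\<bar> \<le> C * \<epsilon> l^2 \<and> \<bar>us s l - ts s l\<bar> \<le> C * \<epsilon> l^4) (at_right 0)"
    using sbound[OF H X1[unfolded X_def]] unfolding us_def ts_def \<epsilon>_def X_def by blast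
  from choice[OF this] obtain Cs where Cs0: "\<forall>s. Cs s \<ge> 0 \<and> eventually (\<lambda>l. \<bar>us s l\<bar> \<le> Cs s * \<epsilon> l^2 \<and> \<bar>us s l - ts s l\<bar> \<le> Cs s * \<epsilon> l^4) (at_right 0)"
    by blast
  have Cs: "\<And>s. Cs s \<ge> 0"
    and evs: "\<And>s. eventually (\<lambda>l. \<bar>us s l\<bar> \<le> Cs s * \<epsilon> l^2 \<and> \<bar>us s l - ts s l\<bar> \<le> Cs s * \<epsilon> l^4) (at_right 0)"
    using Cs0 by auto
  have evall: "eventually (\<lambda>l. \<forall>s. \<bar>us s l\<bar> \<le> Cs s * \<epsilon> l^2 \<and> \<bar>us s l - ts s l\<bar> \<le> Cs s * \<epsilon> l^4) (at_right 0)"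
    by (rule eventually_all_finite) (rule evs)
  have ev01: "eventually (\<lambda>l::real. 0 < l \<and> l < 1) (at_right 0)"
    by (rule eventually_at_rightI[of 0 1]) auto
  have ef: "\<epsilon> l^2 = l powr (2 powr - real X)" "\<epsilon> l^4 = l powr (2 powr -(real X - 1))"
      "\<epsilon> l^4 \<le> \<epsilon> l^2" "l \<le> \<epsilon> l^4" "\<epsilon> l > 0" if "0 < l" "l < 1" for l
    unfolding \<epsilon>_def using eps_facts[OF X1 that] by auto
  define a0 where "a0 = pd f [(0,1)] 0"
  define u where "u = (\<lambda>l. ((\<chi> s. us s l, l) :: (real^'s) \<times> real))"
  define e where "e = ((\<chi> s. if sig s p = p then 1 else 0, 0) :: (real^'s) \<times> real)"
  have peq: "peq sig f p xs x l = f (u l + x *\<^sub>R e)" for x l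
    unfolding peq_eq u_def e_def us_def ..
  have eL: "e = (\<Sum>s\<in>Lset sig p. dirx s)" unfolding e_def by (rule e_decomp)
  have pde: "pd f [e] 0 = 0"
  proof -
    have "pd f [e] 0 = (\<Sum>s\<in>Lset sig p. pd f [dirx s] 0)"
      unfolding eL by (rule pd_sum_first[OF sm finite])
    also have "\<dots> = 0" using crit unfolding critical_def acoef_def .
    finally show ?thesis .
  qed
  have pdee: "pd f [e,e] 0 = 2*P"
  proof -
    have "pd f [e,e] 0 = (\<Sum>s\<in>Lset sig p. pd f [dirx s, e] 0)"
      unfolding eL[of] by (rule pd_sum_first[OF sm finite])
    also have "\<dots> = (\<Sum>s\<in>Lset sig p. \<Sum>t\<in>Lset sig p. pd f [dirx s, dirx t] 0)"
      unfolding eL by (intro sum.cong refl pd_sum_second[OF sm finite])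
    also have "\<dots> = 2*P" unfolding P_def Fsum_def fcoef_def by (simp add: sum_distrib_left)
    finally show ?thesis .
  qed
  define K1 where "K1 = (\<Sum>s\<in>UNIV. Cs s) + 1"
  have K1: "K1 \<ge> 0" unfolding K1_def using Cs by (simp add: sum_nonneg add_nonneg_nonneg)
  have evK1: "eventually (\<lambda>l. norm (u l) \<le> K1 * \<epsilon> l^2) (at_right 0)"
    using evall ev01
  proof eventually_elim
    case (elim l)
    have l: "0 < l" "l < 1" using elim by auto
    have "norm (u l) \<le> norm (\<chi> s. us s l) + norm l" unfolding u_def by (rule norm_Pair_le)
    also have "norm (\<chi> s. us s l) \<le> (\<Sum>s\<in>UNIV. \<bar>us s l\<bar>)" using norm_le_l1_cart[of "\<chi> s. us s l"] by simp
    also have "\<dots> \<le> (\<Sum>s\<in>UNIV. Cs s * \<epsilon> l^2)" using elim by (intro sum_mono) auto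
    also have "norm l \<le> \<epsilon> l^2" using ef[OF l] l by simp
    finally have "norm (u l) \<le> (\<Sum>s\<in>UNIV. Cs s * \<epsilon> l^2) + \<epsilon> l^2" by simp
    then show ?case unfolding K1_def by (simp add: sum_distrib_right algebra_simps)
  qed
  define K2 where "K2 = (\<Sum>s\<in>UNIV. \<bar>acoef f s\<bar> * Cs s) + \<bar>a0\<bar>"
  have K2: "K2 \<ge> 0" unfolding K2_def using Cs by (simp add: sum_nonneg add_nonneg_nonneg)
  have pdu: "pd f [u l] 0 = (\<Sum>s\<in>UNIV. us s l * acoef f s) + l * a0" for l
  proof -
    have "pd f [u l] 0 = pd f [(\<Sum>s\<in>UNIV. us s l *\<^sub>R dirx s) + l *\<^sub>R (0, 1)] 0"
      unfolding u_def u_decomp ..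
    also have "\<dots> = pd f [(\<Sum>s\<in>UNIV. us s l *\<^sub>R dirx s)] 0 + pd f [l *\<^sub>R (0, 1)] 0"
      by (rule pd_add_first[OF sm])
    also have "pd f [(\<Sum>s\<in>UNIV. us s l *\<^sub>R dirx s)] 0 = (\<Sum>s\<in>UNIV. pd f [us s l *\<^sub>R dirx s] 0)"
      by (rule pd_sum_first[OF sm finite])
    also have "\<dots> = (\<Sum>s\<in>UNIV. us s l * acoef f s)"
      unfolding acoef_def by (intro sum.cong refl pd_scale_first[OF sm])
    also have "pd f [l *\<^sub>R (0, 1)] 0 = l * a0" unfolding a0_def by (rule pd_scale_first[OF sm])
    finally show ?thesis .
  qed
  have Sexp: "S * \<epsilon> l^2 = (\<Sum>s\<in>UNIV. ts s l * acoef f s)" for l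
  proof -
    have "S = (\<Sum>t\<in>UNIV. if sig t p \<in> Qset sig p xi then acoef f t * d (sig t p) else 0)"
      unfolding S_def SNsum_def using sum.inter_filter[of UNIV "\<lambda>t. acoef f t * d (sig t p)" "\<lambda>t. sig t p \<in> Qset sig p xi"]
      by simp
    then have "S * \<epsilon> l^2 = (\<Sum>t\<in>UNIV. if sig t p \<in> Qset sig p xi then acoef f t * d (sig t p) else 0) * \<epsilon> l^2"
      by simp
    also have "\<dots> = (\<Sum>t\<in>UNIV. (if sig t p \<in> Qset sig p xi then acoef f t * d (sig t p) else 0) * \<epsilon> l^2)"
      by (rule sum_distrib_right)
    also have "\<dots> = (\<Sum>s\<in>UNIV. ts s l * acoef f s)"
      by (intro sum.cong refl) (simp add: ts_def)
    finally show ?thesis .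
  qed
  have evK2: "eventually (\<lambda>l. \<bar>pd f [u l] 0 - S*\<epsilon> l^2\<bar> \<le> K2*\<epsilon> l^4) (at_right 0)"
    using evall ev01
  proof eventually_elim
    case (elim l)
    have l: "0 < l" "l < 1" using elim by auto
    have "pd f [u l] 0 - S*\<epsilon> l^2 = (\<Sum>s\<in>UNIV. acoef f s * (us s l - ts s l)) + l * a0"
    proof -
      have "(\<Sum>s\<in>UNIV. acoef f s * (us s l - ts s l)) = (\<Sum>s\<in>UNIV. us s l * acoef f s) - (\<Sum>s\<in>UNIV. ts s l * acoef f s)"
        by (simp add: right_diff_distrib sum_subtractf mult.commute)
      then show ?thesis unfolding pdu Sexp by linarith
    qed
    also have "\<bar>\<dots>\<bar> \<le> (\<Sum>s\<in>UNIV. \<bar>acoef f s * (us s l - ts s l)\<bar>) + \<bar>l * a0\<bar>"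
      by (rule order_trans[OF abs_triangle_ineq add_right_mono[OF sum_abs]])
    also have "\<dots> \<le> (\<Sum>s\<in>UNIV. \<bar>acoef f s\<bar> * Cs s * \<epsilon> l^4) + \<epsilon> l^4 * \<bar>a0\<bar>"
    proof (intro add_mono sum_mono)
      fix s
      show "\<bar>acoef f s * (us s l - ts s l)\<bar> \<le> \<bar>acoef f s\<bar> * Cs s * \<epsilon> l^4"
        using elim unfolding abs_mult mult.assoc by (intro mult_left_mono) auto
      show "\<bar>l * a0\<bar> \<le> \<epsilon> l^4 * \<bar>a0\<bar>" unfolding abs_mult using ef[OF l] l
        by (intro mult_right_mono) auto
    qed
    also have "\<dots> = K2 * \<epsilon> l^4" unfolding K2_def by (simp add: sum_distrib_right sum_distrib_left algebra_simps)
    finally show ?case .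
  qed
  have lim: "(\<epsilon> \<longlongrightarrow> 0) (at_right 0)" unfolding \<epsilon>_def
    by (rule tendsto_zero_powrI[where f="\<lambda>l. l", OF tendsto_ident_at tendsto_const])
       (auto intro: eventually_mono[OF eventually_at_right_less])
  have pos: "eventually (\<lambda>l. \<epsilon> l > 0) (at_right 0)" using ev01 by eventually_elim (simp add: \<epsilon>_def)
  obtain K d0 where K: "K \<ge> 0" and d0: "d0 > 0" and evkey: "eventually (\<lambda>l.
     (\<forall>x. \<bar>x\<bar> < d0 \<longrightarrow> DERIV (\<lambda>x. f (u l + x *\<^sub>R e)) x :> pd f [e] (u l + x *\<^sub>R e)) \<and>
     (\<forall>x. \<bar>x\<bar> < d0 \<longrightarrow> \<bar>f (u l + x *\<^sub>R e) - (S*\<epsilon> l^2 + P*x^2)\<bar> \<le> EE K (\<epsilon> l) \<bar>x\<bar>) \<and>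
     (\<forall>x. \<bar>x\<bar> < d0 \<longrightarrow> \<bar>pd f [e] (u l + x *\<^sub>R e) - 2*P*x\<bar> \<le> K*\<epsilon> l^2 + K*(\<epsilon> l^2+\<bar>x\<bar>)*\<bar>x\<bar>))
     (at_right 0)"
    using key_bounds[OF sm f0 pde pdee K1 evK1 K2 evK2 lim] by blast
  define c where "c = S / P"
  have part1: "c > 0 \<longrightarrow> (\<exists>\<delta>>0. \<forall>\<^sub>F lam in at_right 0. \<forall>x. \<bar>x\<bar> < \<delta> \<longrightarrow> peq sig f p xs x lam \<noteq> 0)"
  proof
    assume cp: "c > 0"
    have evVB: "eventually (\<lambda>l. \<forall>x. \<bar>x\<bar> < d0 \<longrightarrow> \<bar>f (u l + x *\<^sub>R e) - (S*\<epsilon> l^2+P*x^2)\<bar> \<le> EE K (\<epsilon> l) \<bar>x\<bar>) (at_right 0)"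
      using evkey by (rule eventually_mono) blast
    obtain \<delta> where "\<delta> > 0" "eventually (\<lambda>l. \<forall>x. \<bar>x\<bar> < \<delta> \<longrightarrow> f (u l + x *\<^sub>R e) \<noteq> 0) (at_right 0)"
      using analytic_i[where g="\<lambda>l x. f (u l + x *\<^sub>R e)", OF K d0 evVB _ lim pos] cp unfolding c_def by blast
    then show "\<exists>\<delta>>0. \<forall>\<^sub>F lam in at_right 0. \<forall>x. \<bar>x\<bar> < \<delta> \<longrightarrow> peq sig f p xs x lam \<noteq> 0"
      unfolding peq by blast
  qed
  have part2: "c < 0 \<longrightarrow>
            (let dplus = sqrt (- c); dminus = - sqrt (- c) in
              dplus \<noteq> 0 \<and> dminus \<noteq> 0 \<and>
              (\<exists>xp xm :: real \<Rightarrow> real.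
                 (\<forall>\<^sub>F lam in at_right 0.
                    peq sig f p xs (xp lam) lam = 0 \<and> peq sig f p xs (xm lam) lam = 0) \<and>
                 (\<lambda>lam. xp lam - dplus * lam powr (2 powr (- (real X + 1))))
                   \<in> O[at_right 0](\<lambda>lam. lam powr (2 powr (- real X))) \<and>
                 (\<lambda>lam. xm lam - dminus * lam powr (2 powr (- (real X + 1))))
                   \<in> O[at_right 0](\<lambda>lam. lam powr (2 powr (- real X))) \<and>
                 (\<exists>\<delta>>0. \<forall>\<^sub>F lam in at_right 0. \<forall>x.
                    \<bar>x\<bar> < \<delta> \<and> peq sig f p xs x lam = 0 \<longrightarrow> x = xp lam \<or> x = xm lam)))"
  proof
    assume cn: "c < 0"
    define g where "g = (\<lambda>l x. f (u l + x *\<^sub>R e))"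
    define D where "D = sqrt (- c)"
    have D0: "D > 0" unfolding D_def using cn by simp
    have DS: "sqrt (-S/P) = D" unfolding D_def c_def by simp
    obtain \<delta> C where dl: "\<delta> > 0" and ev2: "eventually (\<lambda>l. g l 0 \<noteq> 0 \<and>
     (\<exists>!x. 0 < x \<and> x < \<delta> \<and> g l x = 0) \<and>
     (\<forall>x. 0 < x \<and> x < \<delta> \<and> g l x = 0 \<longrightarrow> \<bar>x - sqrt(-S/P)*\<epsilon> l\<bar> \<le> C*\<epsilon> l^2) \<and>
     (\<exists>!x. -\<delta> < x \<and> x < 0 \<and> g l x = 0) \<and>
     (\<forall>x. -\<delta> < x \<and> x < 0 \<and> g l x = 0 \<longrightarrow> \<bar>x + sqrt(-S/P)*\<epsilon> l\<bar> \<le> C*\<epsilon> l^2)) (at_right 0)"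
    proof -
      have evk2: "eventually (\<lambda>l.
     (\<forall>x. \<bar>x\<bar> < d0 \<longrightarrow> DERIV (g l) x :> (\<lambda>l x. pd f [e] (u l + x *\<^sub>R e)) l x) \<and>
     (\<forall>x. \<bar>x\<bar> < d0 \<longrightarrow> \<bar>g l x - (S*\<epsilon> l^2+P*x^2)\<bar> \<le> EE K (\<epsilon> l) \<bar>x\<bar>) \<and>
     (\<forall>x. \<bar>x\<bar> < d0 \<longrightarrow> \<bar>(\<lambda>l x. pd f [e] (u l + x *\<^sub>R e)) l x - 2*P*x\<bar> \<le> K*\<epsilon> l^2 + K*(\<epsilon> l^2+\<bar>x\<bar>)*\<bar>x\<bar>)) (at_right 0)"
        using evkey unfolding g_def by simp
      have SP: "S/P < 0" using cn unfolding c_def .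
      show ?thesis
        using analytic_ii[where g=g and g'="\<lambda>l x. pd f [e] (u l + x *\<^sub>R e)", OF K d0 evk2 SP lim pos]
        by (elim exE conjE) (rule that; assumption)
    qed
    define xp where "xp = (\<lambda>l. SOME x. 0 < x \<and> x < \<delta> \<and> g l x = 0)"
    define xm where "xm = (\<lambda>l. SOME x. -\<delta> < x \<and> x < 0 \<and> g l x = 0)"
    have evx: "eventually (\<lambda>l. (0 < xp l \<and> xp l < \<delta> \<and> g l (xp l) = 0) \<and>
       (-\<delta> < xm l \<and> xm l < 0 \<and> g l (xm l) = 0) \<and>
       \<bar>xp l - D * \<epsilon> l\<bar> \<le> C * \<epsilon> l^2 \<and> \<bar>xm l - (-D) * \<epsilon> l\<bar> \<le> C * \<epsilon> l^2 \<and>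
       (\<forall>x. \<bar>x\<bar> < \<delta> \<and> g l x = 0 \<longrightarrow> x = xp l \<or> x = xm l)) (at_right 0)"
      using ev2
    proof eventually_elim
      case (elim l)
      have e1: "g l 0 \<noteq> 0" using elim by (elim conjE) assumption
      have e2: "\<exists>!x. 0 < x \<and> x < \<delta> \<and> g l x = 0" using elim by (elim conjE) assumption
      have e3: "\<forall>x. 0 < x \<and> x < \<delta> \<and> g l x = 0 \<longrightarrow> \<bar>x - sqrt(-S/P)*\<epsilon> l\<bar> \<le> C*\<epsilon> l^2"
        using elim by (elim conjE) assumption
      have e4: "\<exists>!x. -\<delta> < x \<and> x < 0 \<and> g l x = 0" using elim by (elim conjE) assumption
      have e5: "\<forall>x. -\<delta> < x \<and> x < 0 \<and> g l x = 0 \<longrightarrow> \<bar>x + sqrt(-S/P)*\<epsilon> l\<bar> \<le> C*\<epsilon> l^2"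
        using elim by (elim conjE) assumption
      from e2 obtain w where w: "0 < w \<and> w < \<delta> \<and> g l w = 0"
        and wu: "\<forall>y. 0 < y \<and> y < \<delta> \<and> g l y = 0 \<longrightarrow> y = w" by (rule ex1E)
      from e4 obtain v where v: "-\<delta> < v \<and> v < 0 \<and> g l v = 0"
        and vu: "\<forall>y. -\<delta> < y \<and> y < 0 \<and> g l y = 0 \<longrightarrow> y = v" by (rule ex1E)
      have p1: "0 < xp l \<and> xp l < \<delta> \<and> g l (xp l) = 0"
        unfolding xp_def using w by (rule someI)
      have m1: "-\<delta> < xm l \<and> xm l < 0 \<and> g l (xm l) = 0"
        unfolding xm_def using v by (rule someI)
      have p2: "\<bar>xp l - D * \<epsilon> l\<bar> \<le> C * \<epsilon> l^2" using mp[OF spec[OF e3, of "xp l"] p1] unfolding DS .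
      have m2': "\<bar>xm l + D * \<epsilon> l\<bar> \<le> C * \<epsilon> l^2" using mp[OF spec[OF e5, of "xm l"] m1] unfolding DS .
      have m2: "\<bar>xm l - (-D) * \<epsilon> l\<bar> \<le> C * \<epsilon> l^2" using m2' by simp
      have un: "x = xp l \<or> x = xm l" if x: "\<bar>x\<bar> < \<delta>" "g l x = 0" for x
      proof -
        have "x \<noteq> 0" using e1 x by auto
        then have "0 < x \<or> x < 0" by auto
        then show ?thesis
        proof
          assume "0 < x"
          then have "x = w" using wu x by auto
          moreover have "xp l = w" using wu p1 by blast
          ultimately show ?thesis by simp
        next
          assume "x < 0"
          then have "x = v" using vu x by auto
          moreover have "xm l = v" using vu m1 by blast
          ultimately show ?thesis by simp
        qed
      qed
      show ?case using p1 m1 p2 m2 un by blast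
    qed
    have bigO: "(\<lambda>lam. z lam - D' * lam powr (2 powr (- (real X + 1))))
                   \<in> O[at_right 0](\<lambda>lam. lam powr (2 powr (- real X)))"
      if ev: "eventually (\<lambda>l. \<bar>z l - D' * \<epsilon> l\<bar> \<le> C * \<epsilon> l^2) (at_right 0)" for z D'
    proof (rule bigoI[where c=C])
      show "eventually (\<lambda>l. norm (z l - D' * l powr (2 powr (- (real X + 1)))) \<le> C * norm (l powr (2 powr (- real X)))) (at_right 0)"
        using ev ev01
      proof eventually_elim
        case (elim l)
        then show ?case using ef[of l] unfolding \<epsilon>_def by simp
      qed
    qed
    show "let dplus = sqrt (- c); dminus = - sqrt (- c) in
              dplus \<noteq> 0 \<and> dminus \<noteq> 0 \<and>
              (\<exists>xp xm :: real \<Rightarrow> real.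
                 (\<forall>\<^sub>F lam in at_right 0.
                    peq sig f p xs (xp lam) lam = 0 \<and> peq sig f p xs (xm lam) lam = 0) \<and>
                 (\<lambda>lam. xp lam - dplus * lam powr (2 powr (- (real X + 1))))
                   \<in> O[at_right 0](\<lambda>lam. lam powr (2 powr (- real X))) \<and>
                 (\<lambda>lam. xm lam - dminus * lam powr (2 powr (- (real X + 1))))
                   \<in> O[at_right 0](\<lambda>lam. lam powr (2 powr (- real X))) \<and>
                 (\<exists>\<delta>>0. \<forall>\<^sub>F lam in at_right 0. \<forall>x.
                    \<bar>x\<bar> < \<delta> \<and> peq sig f p xs x lam = 0 \<longrightarrow> x = xp lam \<or> x = xm lam))"
      unfolding Let_def D_def[symmetric]
    proof (intro conjI)
      show "D \<noteq> 0" "- D \<noteq> 0" using D0 by auto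
    next
      show "\<exists>xp xm :: real \<Rightarrow> real.
                 (\<forall>\<^sub>F lam in at_right 0.
                    peq sig f p xs (xp lam) lam = 0 \<and> peq sig f p xs (xm lam) lam = 0) \<and>
                 (\<lambda>lam. xp lam - D * lam powr (2 powr (- (real X + 1))))
                   \<in> O[at_right 0](\<lambda>lam. lam powr (2 powr (- real X))) \<and>
                 (\<lambda>lam. xm lam - - D * lam powr (2 powr (- (real X + 1))))
                   \<in> O[at_right 0](\<lambda>lam. lam powr (2 powr (- real X))) \<and>
                 (\<exists>\<delta>>0. \<forall>\<^sub>F lam in at_right 0. \<forall>x.
                    \<bar>x\<bar> < \<delta> \<and> peq sig f p xs x lam = 0 \<longrightarrow> x = xp lam \<or> x = xm lam)"
    proof (rule exI[of _ xp], rule exI[of _ xm], intro conjI)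
      show "\<forall>\<^sub>F lam in at_right 0. peq sig f p xs (xp lam) lam = 0 \<and> peq sig f p xs (xm lam) lam = 0"
        using evx by (rule eventually_mono) (auto simp: peq g_def)
      show "(\<lambda>lam. xp lam - D * lam powr (2 powr (- (real X + 1))))
                   \<in> O[at_right 0](\<lambda>lam. lam powr (2 powr (- real X)))"
        by (rule bigO) (use evx in \<open>rule eventually_mono\<close>, auto)
      show "(\<lambda>lam. xm lam - - D * lam powr (2 powr (- (real X + 1))))
                   \<in> O[at_right 0](\<lambda>lam. lam powr (2 powr (- real X)))"
        by (rule bigO) (use evx in \<open>rule eventually_mono\<close>, auto)
      show "\<exists>\<delta>>0. \<forall>\<^sub>F lam in at_right 0. \<forall>x. \<bar>x\<bar> < \<delta> \<and> peq sig f p xs x lam = 0 \<longrightarrow> x = xp lam \<or> x = xm lam"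
        using dl evx unfolding peq g_def by (blast intro: eventually_mono)
    qed
    qed
  qed
  show ?thesis unfolding Let_def[of "SNsum sig f p d xi / Fsum sig f p"] Let_def[of "Xi sig p xi"]
    using part1 part2 unfolding c_def S_def P_def X_def by simp
qed


theorem lemma4p19:
  fixes sig :: "'s::finite \<Rightarrow> 'c::finite \<Rightarrow> 'c" and s1 :: 's
    and B :: "'c set" and p :: 'c and K :: "'c set"
  assumes "network sig s1"
  shows "generically sig K (\<lambda>f.
     \<forall>(xs :: 'c \<Rightarrow> real \<Rightarrow> real) (d :: 'c \<Rightarrow> real) (xi :: 'c \<Rightarrow> nat).
       assumption_B sig f \<and>
       (\<forall>q. maximal_cell sig q \<longrightarrow> \<not> critical sig f q) \<and>
       root_subnetwork sig f B \<and> p \<notin> B \<and> critical sig f p \<and>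
       hyp_H sig p xs d xi \<and> cond_SN sig f p d xi \<longrightarrow>
       (let c = SNsum sig f p d xi / Fsum sig f p; X = Xi sig p xi in
         (c > 0 \<longrightarrow>
            (\<exists>\<delta>>0. \<forall>\<^sub>F lam in at_right 0. \<forall>x. \<bar>x\<bar> < \<delta> \<longrightarrow> peq sig f p xs x lam \<noteq> 0)) \<and>
         (c < 0 \<longrightarrow>
            (let dplus = sqrt (- c); dminus = - sqrt (- c) in
              dplus \<noteq> 0 \<and> dminus \<noteq> 0 \<and>
              (\<exists>xp xm :: real \<Rightarrow> real.
                 (\<forall>\<^sub>F lam in at_right 0.
                    peq sig f p xs (xp lam) lam = 0 \<and> peq sig f p xs (xm lam) lam = 0) \<and>
                 (\<lambda>lam. xp lam - dplus * lam powr (2 powr (- (real X + 1))))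
                   \<in> O[at_right 0](\<lambda>lam. lam powr (2 powr (- real X))) \<and>
                 (\<lambda>lam. xm lam - dminus * lam powr (2 powr (- (real X + 1))))
                   \<in> O[at_right 0](\<lambda>lam. lam powr (2 powr (- real X))) \<and>
                 (\<exists>\<delta>>0. \<forall>\<^sub>F lam in at_right 0. \<forall>x.
                    \<bar>x\<bar> < \<delta> \<and> peq sig f p xs x lam = 0 \<longrightarrow> x = xp lam \<or> x = xm lam))))))"
proof (rule generic_from_Fsum[OF assms])
  fix f :: "'s resp"
  assume sm: "smooth f" and f0: "f 0 = 0" and Fs: "Fsum sig f p \<noteq> 0"
  show "\<forall>(xs :: 'c \<Rightarrow> real \<Rightarrow> real) (d :: 'c \<Rightarrow> real) (xi :: 'c \<Rightarrow> nat).
       assumption_B sig f \<and>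
       (\<forall>q. maximal_cell sig q \<longrightarrow> \<not> critical sig f q) \<and>
       root_subnetwork sig f B \<and> p \<notin> B \<and> critical sig f p \<and>
       hyp_H sig p xs d xi \<and> cond_SN sig f p d xi \<longrightarrow>
       (let c = SNsum sig f p d xi / Fsum sig f p; X = Xi sig p xi in
         (c > 0 \<longrightarrow>
            (\<exists>\<delta>>0. \<forall>\<^sub>F lam in at_right 0. \<forall>x. \<bar>x\<bar> < \<delta> \<longrightarrow> peq sig f p xs x lam \<noteq> 0)) \<and>
         (c < 0 \<longrightarrow>
            (let dplus = sqrt (- c); dminus = - sqrt (- c) in
              dplus \<noteq> 0 \<and> dminus \<noteq> 0 \<and>
              (\<exists>xp xm :: real \<Rightarrow> real.
                 (\<forall>\<^sub>F lam in at_right 0.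
                    peq sig f p xs (xp lam) lam = 0 \<and> peq sig f p xs (xm lam) lam = 0) \<and>
                 (\<lambda>lam. xp lam - dplus * lam powr (2 powr (- (real X + 1))))
                   \<in> O[at_right 0](\<lambda>lam. lam powr (2 powr (- real X))) \<and>
                 (\<lambda>lam. xm lam - dminus * lam powr (2 powr (- (real X + 1))))
                   \<in> O[at_right 0](\<lambda>lam. lam powr (2 powr (- real X))) \<and>
                 (\<exists>\<delta>>0. \<forall>\<^sub>F lam in at_right 0. \<forall>x.
                    \<bar>x\<bar> < \<delta> \<and> peq sig f p xs x lam = 0 \<longrightarrow> x = xp lam \<or> x = xm lam)))))"
  proof (intro allI impI)
    fix xs :: "'c \<Rightarrow> real \<Rightarrow> real" and d :: "'c \<Rightarrow> real" and xi :: "'c \<Rightarrow> nat"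
    assume h: "assumption_B sig f \<and>
       (\<forall>q. maximal_cell sig q \<longrightarrow> \<not> critical sig f q) \<and>
       root_subnetwork sig f B \<and> p \<notin> B \<and> critical sig f p \<and>
       hyp_H sig p xs d xi \<and> cond_SN sig f p d xi"
    then have crit: "critical sig f p" and H: "hyp_H sig p xs d xi" and SN: "cond_SN sig f p d xi"
      by blast+
    show "let c = SNsum sig f p d xi / Fsum sig f p; X = Xi sig p xi in
         (c > 0 \<longrightarrow>
            (\<exists>\<delta>>0. \<forall>\<^sub>F lam in at_right 0. \<forall>x. \<bar>x\<bar> < \<delta> \<longrightarrow> peq sig f p xs x lam \<noteq> 0)) \<and>
         (c < 0 \<longrightarrow>
            (let dplus = sqrt (- c); dminus = - sqrt (- c) in
              dplus \<noteq> 0 \<and> dminus \<noteq> 0 \<and>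
              (\<exists>xp xm :: real \<Rightarrow> real.
                 (\<forall>\<^sub>F lam in at_right 0.
                    peq sig f p xs (xp lam) lam = 0 \<and> peq sig f p xs (xm lam) lam = 0) \<and>
                 (\<lambda>lam. xp lam - dplus * lam powr (2 powr (- (real X + 1))))
                   \<in> O[at_right 0](\<lambda>lam. lam powr (2 powr (- real X))) \<and>
                 (\<lambda>lam. xm lam - dminus * lam powr (2 powr (- (real X + 1))))
                   \<in> O[at_right 0](\<lambda>lam. lam powr (2 powr (- real X))) \<and>
                 (\<exists>\<delta>>0. \<forall>\<^sub>F lam in at_right 0. \<forall>x.
                    \<bar>x\<bar> < \<delta> \<and> peq sig f p xs x lam = 0 \<longrightarrow> x = xp lam \<or> x = xm lam))))"
      by (rule P_holds[OF sm f0 Fs crit H SN])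
  qed
qed

end
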